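(* A family $\{\Theta_n\}_{n\ge0}$ of lattice congruences ($\Theta_n$ on the weak order $S_n$) is insertional if and only if for every $n$ and every join-irreducible $\gamma\in S_n$ contracted by $\Theta_n$, with associated subset $A$, $m=\min A$ and $M=\max([n]\setminus A)$, the following hold: (i) $\Theta_{n+1}$ contracts the right insertion $\mathrm{R}_i(\gamma)$ for every $i\in[m+1,M+1]$; (ii) $\Theta_{n+1}$ contracts the left insertion $\mathrm{L}_i(\gamma)$ for every $i\in[m,M]$.
   Context: $S_n$: permutations of $[n]$ in one-line notation with the right weak order (inclusion of sets of inverted value pairs), a lattice. A join-irreducible $\gamma\in S_n$ is a permutation with exactly one descent $\gamma_i>\gamma_{i+1}$; its associated subset is $A=\{\gamma_{i+1},\dots,\gamma_n\}$, and $\gamma$ consists of the elements of $[n]\setminus A$ in increasing order followed by those of $A$ in increasing order (this gives a bijection between join-irreducibles and nonempty $A\subseteq[n]$ with $\max([n]\setminus A)>\min A$). $\gamma_*$ is the unique element covered by $\gamma$; a congruence contracts $\gamma$ if $\gamma\equiv\gamma_*$. For $i\in[n+1]$, $\mathrm{L}_i(\gamma)$ is the join-irreducible of $S_{n+1}$ with associated subset $(A\cap[1,i-1])\cup\{j+1:j\in A\cap[i,n]\}$, and $\mathrm{R}_i(\gamma)$ the one with associated subset $(A\cap[1,i-1])\cup\{i\}\cup\{j+1:j\in A\cap[i,n]\}$. $\mathrm{st}(a_1..a_k)$ is the $u\in S_k$ with $u_i<u_j\iff a_i<a_j$. The family is insertional if for all $p,q\ge0$ and every $p$-subset $Q\subseteq[p+q]$,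 letting $\varphi_Q(u,v)$ be the unique $x\in S_{p+q}$ with $\{x_1..x_p\}=Q$, $\mathrm{st}(x_1..x_p)=u$, $\mathrm{st}(x_{p+1}..x_{p+q})=v$: whenever $u\equiv u'$ mod $\Theta_p$ and $v\equiv v'$ mod $\Theta_q$, $\varphi_Q(u,v)\equiv\varphi_Q(u',v')$ mod $\Theta_{p+q}$. *)

theory Defs
  imports Main
begin

definition perms :: "nat \<Rightarrow> nat list set" where
  "perms n = {xs. distinct xs \<and> set xs = {1..n}}"

definition inversions :: "nat list \<Rightarrow> (nat \<times> nat) set" where
  "inversions xs = {(a, b). a < b \<and> (\<exists>i j. i < j \<and> j < length xs \<and> xs ! i = b \<and> xs ! j = a)}"

definition weak_le :: "nat list \<Rightarrow> nat list \<Rightarrow> bool" where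
  "weak_le x y \<longleftrightarrow> inversions x \<subseteq> inversions y"

definition weak_join :: "nat \<Rightarrow> nat list \<Rightarrow> nat list \<Rightarrow> nat list" where
  "weak_join n x y = (THE z. z \<in> perms n \<and> weak_le x z \<and> weak_le y z \<and>
      (\<forall>w\<in>perms n. weak_le x w \<and> weak_le y w \<longrightarrow> weak_le z w))"

definition weak_meet :: "nat \<Rightarrow> nat list \<Rightarrow> nat list \<Rightarrow> nat list" where
  "weak_meet n x y = (THE z. z \<in> perms n \<and> weak_le z x \<and> weak_le z y \<and>
      (\<forall>w\<in>perms n. weak_le w x \<and> weak_le w y \<longrightarrow> weak_le w z))"

definition lattice_congruence :: "nat \<Rightarrow> (nat list \<times> nat list) set \<Rightarrow> bool" where
  "lattice_congruence n \<Theta> \<longleftrightarrow> equiv (perms n) \<Theta> \<and>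
     (\<forall>x x' y y'. (x, x') \<in> \<Theta> \<longrightarrow> (y, y') \<in> \<Theta> \<longrightarrow>
        (weak_join n x y, weak_join n x' y') \<in> \<Theta> \<and>
        (weak_meet n x y, weak_meet n x' y') \<in> \<Theta>)"

definition weak_covers :: "nat \<Rightarrow> nat list \<Rightarrow> nat list \<Rightarrow> bool" where
  "weak_covers n y x \<longleftrightarrow> x \<in> perms n \<and> y \<in> perms n \<and> weak_le x y \<and> x \<noteq> y \<and>
     \<not> (\<exists>z\<in>perms n. weak_le x z \<and> weak_le z y \<and> z \<noteq> x \<and> z \<noteq> y)"

(* Descent positions (0-based): i with xs!i > xs!(i+1) *)
definition descents :: "nat list \<Rightarrow> nat set" where
  "descents xs = {i. Suc i < length xs \<and> xs ! i > xs ! Suc i}"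

definition join_irreducible :: "nat \<Rightarrow> nat list \<Rightarrow> bool" where
  "join_irreducible n g \<longleftrightarrow> g \<in> perms n \<and> card (descents g) = 1"

(* Associated subset {g_{i+1},...,g_n} where g_i > g_{i+1} is the descent *)
definition assoc_subset :: "nat list \<Rightarrow> nat set" where
  "assoc_subset g = set (drop (Suc (the_elem (descents g))) g)"

definition lower_cover :: "nat \<Rightarrow> nat list \<Rightarrow> nat list" where
  "lower_cover n g = (THE x. weak_covers n g x)"

definition contracts :: "nat \<Rightarrow> (nat list \<times> nat list) set \<Rightarrow> nat list \<Rightarrow> bool" where
  "contracts n \<Theta> g \<longleftrightarrow> (g, lower_cover n g) \<in> \<Theta>"

(* The join-irreducible of S_m with associated subset B *)
definition jirr_of :: "nat \<Rightarrow> nat set \<Rightarrow> nat list" where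
  "jirr_of m B = sorted_list_of_set ({1..m} - B) @ sorted_list_of_set B"

definition L_ins :: "nat \<Rightarrow> nat \<Rightarrow> nat list \<Rightarrow> nat list" where
  "L_ins n i g = (let A = assoc_subset g in
     jirr_of (Suc n) ((A \<inter> {1..i-1}) \<union> {Suc j | j. j \<in> A \<inter> {i..n}}))"

definition R_ins :: "nat \<Rightarrow> nat \<Rightarrow> nat list \<Rightarrow> nat list" where
  "R_ins n i g = (let A = assoc_subset g in
     jirr_of (Suc n) ((A \<inter> {1..i-1}) \<union> {i} \<union> {Suc j | j. j \<in> A \<inter> {i..n}}))"

definition st :: "nat list \<Rightarrow> nat list" where
  "st xs = map (\<lambda>a. card {b \<in> set xs. b \<le> a}) xs"

definition phi :: "nat \<Rightarrow> nat \<Rightarrow> nat set \<Rightarrow> nat list \<Rightarrow> nat list \<Rightarrow> nat list" where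
  "phi p q Q u v = (THE x. x \<in> perms (p + q) \<and> set (take p x) = Q \<and>
      st (take p x) = u \<and> st (drop p x) = v)"

definition insertional :: "(nat \<Rightarrow> (nat list \<times> nat list) set) \<Rightarrow> bool" where
  "insertional \<Theta> \<longleftrightarrow> (\<forall>p q Q u u' v v'. Q \<subseteq> {1..p+q} \<and> card Q = p \<and>
      (u, u') \<in> \<Theta> p \<and> (v, v') \<in> \<Theta> q \<longrightarrow>
      (phi p q Q u v, phi p q Q u' v') \<in> \<Theta> (p + q))"

end

theory Submission
  imports Defs
begin


definition bef :: "nat list \<Rightarrow> nat \<Rightarrow> nat \<Rightarrow> bool" where
  "bef xs c d \<longleftrightarrow> (\<exists>i j. i < j \<and> j < length xs \<and> xs ! i = c \<and> xs ! j = d)"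

lemma inversions_bef: "inversions xs = {(a, b). a < b \<and> bef xs b a}"
  unfolding inversions_def bef_def by auto

lemma bef_set: "bef xs c d \<Longrightarrow> c \<in> set xs \<and> d \<in> set xs"
  unfolding bef_def by auto

lemma bef_irrefl: "distinct xs \<Longrightarrow> \<not> bef xs c c"
  unfolding bef_def by (auto simp: nth_eq_iff_index_eq)

lemma bef_asym: "distinct xs \<Longrightarrow> bef xs c d \<Longrightarrow> \<not> bef xs d c"
  unfolding bef_def
  by (metis dual_order.strict_trans nat_neq_iff nth_eq_iff_index_eq)

lemma bef_trans: "distinct xs \<Longrightarrow> bef xs c d \<Longrightarrow> bef xs d e \<Longrightarrow> bef xs c e"
  unfolding bef_def
  by (metis dual_order.strict_trans nth_eq_iff_index_eq)

lemma bef_total: "c \<in> set xs \<Longrightarrow> d \<in> set xs \<Longrightarrow> c \<noteq> d \<Longrightarrow> bef xs c d \<or> bef xs d c"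
  unfolding bef_def in_set_conv_nth
  by (metis nat_neq_iff)

lemma bef_Nil[simp]: "\<not> bef [] c d"
  unfolding bef_def by auto

lemma bef_Cons: "bef (x # xs) c d \<longleftrightarrow> (c = x \<and> d \<in> set xs) \<or> bef xs c d"
proof
  assume "bef (x # xs) c d"
  then obtain i j where ij: "i < j" "j < length (x#xs)" "(x#xs) ! i = c" "(x#xs) ! j = d"
    unfolding bef_def by blast
  show "(c = x \<and> d \<in> set xs) \<or> bef xs c d"
  proof (cases i)
    case 0
    then show ?thesis using ij by (cases j) auto
  next
    case (Suc i')
    then obtain j' where "j = Suc j'" using ij by (cases j) auto
    then show ?thesis using ij Suc unfolding bef_def by auto
  qed
next
  assume "(c = x \<and> d \<in> set xs) \<or> bef xs c d"
  then show "bef (x # xs) c d"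
  proof
    assume "c = x \<and> d \<in> set xs"
    then obtain j where "j < length xs" "xs ! j = d" by (auto simp: in_set_conv_nth)
    then show ?thesis unfolding bef_def using \<open>c = x \<and> d \<in> set xs\<close>
      by (rule_tac x=0 in exI, rule_tac x="Suc j" in exI) auto
  next
    assume "bef xs c d"
    then obtain i j where "i < j" "j < length xs" "xs ! i = c" "xs ! j = d" unfolding bef_def by blast
    then show ?thesis unfolding bef_def
      by (rule_tac x="Suc i" in exI, rule_tac x="Suc j" in exI) auto
  qed
qed

lemma bef_append: "bef (xs @ ys) c d \<longleftrightarrow> bef xs c d \<or> bef ys c d \<or> (c \<in> set xs \<and> d \<in> set ys)"
  by (induction xs) (auto simp: bef_Cons)

lemma bef_snoc: "bef (xs @ [y]) c d \<longleftrightarrow> bef xs c d \<or> (c \<in> set xs \<and> d = y)"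
  by (simp add: bef_append bef_Cons)

lemma bef_rev: "bef (rev xs) c d \<longleftrightarrow> bef xs d c"
  by (induction xs) (auto simp: bef_Cons bef_snoc)

lemma bef_map: "bef (map f xs) c d \<longleftrightarrow> (\<exists>c' d'. c = f c' \<and> d = f d' \<and> bef xs c' d')"
  by (induction xs) (auto simp: bef_Cons)

lemma bef_map_inj: "inj_on f (set xs) \<Longrightarrow> c \<in> set xs \<Longrightarrow> d \<in> set xs \<Longrightarrow>
   bef (map f xs) (f c) (f d) \<longleftrightarrow> bef xs c d"
  unfolding bef_map by (metis bef_set inj_on_def)

lemma bef_sorted: "sorted xs \<Longrightarrow> distinct xs \<Longrightarrow> bef xs c d \<longleftrightarrow> c \<in> set xs \<and> d \<in> set xs \<and> c < d"
  by (induction xs) (auto simp: bef_Cons, metis le_neq_trans)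

lemma in_set_drop_conv: "c \<in> set (drop k xs) \<longleftrightarrow> (\<exists>j. k \<le> j \<and> j < length xs \<and> xs ! j = c)"
  by (auto simp: in_set_conv_nth) (metis le_add1 add.commute less_diff_conv, 
      metis add_diff_inverse_nat diff_less_mono not_less)



definition swp :: "nat list \<Rightarrow> nat \<Rightarrow> nat list" where
  "swp xs d = xs[d := xs ! Suc d, Suc d := xs ! d]"

lemma decomp2: "Suc d < length xs \<Longrightarrow> xs = take d xs @ xs ! d # xs ! Suc d # drop (Suc (Suc d)) xs"
  by (metis Cons_nth_drop_Suc Suc_lessD append_take_drop_id)

lemma swp_decomp: "Suc d < length xs \<Longrightarrow> swp xs d = take d xs @ xs ! Suc d # xs ! d # drop (Suc (Suc d)) xs"
  unfolding swp_def
  by (rule nth_equalityI) (auto simp: nth_append nth_list_update nth_Cons' min_def numeral_2_eq_2 Suc_diff_Suc)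

lemma length_swp[simp]: "length (swp xs d) = length xs"
  unfolding swp_def by simp

lemma swp_sets:
  assumes "Suc d < length xs"
  shows "set (swp xs d) = set xs \<and> distinct (swp xs d) = distinct xs"
proof -
  define P where "P = take d xs"
  define S where "S = drop (Suc (Suc d)) xs"
  have e: "xs = P @ xs ! d # xs ! Suc d # S" unfolding P_def S_def using decomp2[OF assms] .
  have s: "swp xs d = P @ xs ! Suc d # xs ! d # S" unfolding P_def S_def using swp_decomp[OF assms] .
  show ?thesis unfolding s by (subst (3 4) e) auto
qed

lemma set_swp[simp]: "Suc d < length xs \<Longrightarrow> set (swp xs d) = set xs"
  using swp_sets by blast

lemma distinct_swp[simp]: "Suc d < length xs \<Longrightarrow> distinct (swp xs d) = distinct xs"
  using swp_sets by blast

lemma bef_swp: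
  assumes "distinct xs" "Suc d < length xs"
  shows "bef (swp xs d) c e \<longleftrightarrow> (bef xs c e \<and> \<not> (c = xs ! d \<and> e = xs ! Suc d)) \<or> (c = xs ! Suc d \<and> e = xs ! d)"
proof -
  define P where "P = take d xs"
  define S where "S = drop (Suc (Suc d)) xs"
  define a where "a = xs ! Suc d"
  define b where "b = xs ! d"
  have x: "xs = P @ b # a # S" unfolding P_def S_def a_def b_def using decomp2[OF assms(2)] .
  have s: "swp xs d = P @ a # b # S" unfolding P_def S_def a_def b_def using swp_decomp[OF assms(2)] .
  have dist: "distinct (P @ b # a # S)" using assms(1) x by simp
  show ?thesis unfolding s a_def[symmetric] b_def[symmetric]
    apply (subst (1) x)
    using dist by (auto simp: bef_append bef_Cons dest: bef_set)
qed

lemma bef_chain: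
  assumes "distinct x" "set y \<subseteq> set x" "\<forall>i. Suc i < length y \<longrightarrow> bef x (y ! i) (y ! Suc i)"
  shows "bef y c d \<Longrightarrow> bef x c d"
  using assms(2,3)
proof (induction y arbitrary: c d)
  case Nil
  then show ?case by simp
next
  case (Cons a y)
  have IH: "bef y c' d' \<Longrightarrow> bef x c' d'" for c' d'
    using Cons.IH Cons.prems(2,3) by (metis Suc_less_eq length_Cons nth_Cons_Suc subset_code(1) list.set_intros(2))
  from Cons.prems(1) consider "c = a" "d \<in> set y" | "bef y c d" by (auto simp: bef_Cons)
  then show ?case
  proof cases
    case 1
    then obtain b y' where y: "y = b # y'" by (cases y) auto
    have ab: "bef x a b" using Cons.prems(3)[rule_format, of 0] y by simp
    from 1 y have "d = b \<or> bef y b d" by (auto simp: bef_Cons)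
    then show ?thesis using ab IH 1 bef_trans[OF assms(1)] by blast
  next
    case 2
    then show ?thesis using IH by blast
  qed
qed

lemma perms_D: "x \<in> perms n \<Longrightarrow> distinct x \<and> set x = {1..n} \<and> length x = n"
  unfolding perms_def by (auto dest: distinct_card)

lemma bef_eq_imp_eq:
  assumes "distinct xs" "distinct ys" "set xs = set ys" "\<And>c d. bef xs c d \<longleftrightarrow> bef ys c d"
  shows "xs = ys"
  using assms
proof (induction xs arbitrary: ys)
  case Nil
  then show ?case by simp
next
  case (Cons x xs)
  then obtain y ys' where ys: "ys = y # ys'" by (cases ys) auto
  have "x = y"
  proof (rule ccontr)
    assume "x \<noteq> y"
    then have "y \<in> set xs" using Cons.prems(3) ys by auto
    then have "bef (x # xs) x y" by (simp add: bef_Cons)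
    then have "bef ys x y" using Cons.prems(4) by blast
    then show False using ys Cons.prems(2) \<open>x \<noteq> y\<close> by (auto simp: bef_Cons dest: bef_set)
  qed
  moreover have "xs = ys'"
  proof (rule Cons.IH)
    show "distinct xs" "distinct ys'" using Cons.prems ys by auto
    show "set xs = set ys'" using Cons.prems(1,2,3) ys \<open>x = y\<close>
      by (metis Diff_insert_absorb distinct.simps(2) list.simps(15))
    fix c d
    show "bef xs c d \<longleftrightarrow> bef ys' c d"
      using Cons.prems(4)[of c d] Cons.prems(1,2) ys \<open>x = y\<close>
      by (auto simp: bef_Cons dest: bef_set)
  qed
  ultimately show ?case using ys by simp
qed

lemma inv_eq_imp_eq:
  assumes "x \<in> perms n" "y \<in> perms n" "inversions x = inversions y"
  shows "x = y"
proof (rule bef_eq_imp_eq)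
  show dx: "distinct x" and dy: "distinct y" and sx: "set x = set y" using assms(1,2) perms_D by auto
  fix c d
  show "bef x c d \<longleftrightarrow> bef y c d"
  proof (cases "c < d")
    case True
    have "bef x c d \<longleftrightarrow> c \<in> set x \<and> d \<in> set x \<and> \<not> bef x d c"
      using dx bef_total bef_asym bef_set True by (metis less_irrefl)
    moreover have "bef y c d \<longleftrightarrow> c \<in> set y \<and> d \<in> set y \<and> \<not> bef y d c"
      using dy bef_total bef_asym bef_set True by (metis less_irrefl)
    moreover have "bef x d c \<longleftrightarrow> bef y d c" using assms(3) True unfolding inversions_bef by auto
    ultimately show ?thesis using sx by auto
  next
    case False
    show ?thesis
    proof (cases "c = d")
      case True
      then show ?thesis using bef_irrefl dx dy by auto
    next
      case False
      then have "d < c" using \<open>\<not> c < d\<close> by auto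
      then show ?thesis using assms(3) unfolding inversions_bef by auto
    qed
  qed
qed

lemma descent_exists:
  assumes "x \<in> perms n" "y \<in> perms n" "weak_le x y" "x \<noteq> y"
  shows "\<exists>d \<in> descents y. (y ! Suc d, y ! d) \<notin> inversions x"
proof (rule ccontr)
  assume H: "\<not> ?thesis"
  have dx: "distinct x" and dy: "distinct y" and sx: "set x = set y" using assms(1,2) perms_D by auto
  have adj: "bef x (y ! i) (y ! Suc i)" if "Suc i < length y" for i
  proof (cases "y ! i > y ! Suc i")
    case True
    then have "i \<in> descents y" using that unfolding descents_def by auto
    then have "(y ! Suc i, y ! i) \<in> inversions x" using H by auto
    then show ?thesis unfolding inversions_bef by auto
  next
    case False
    have ne: "y ! i \<noteq> y ! Suc i" using dy that by (simp add: nth_eq_iff_index_eq)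
    then have lt: "y ! i < y ! Suc i" using False by auto
    have byy: "bef y (y ! i) (y ! Suc i)" unfolding bef_def using that by blast
    show ?thesis
    proof (rule ccontr)
      assume "\<not> bef x (y ! i) (y ! Suc i)"
      moreover have "y ! i \<in> set x" "y ! Suc i \<in> set x" using sx that by auto
      ultimately have "bef x (y ! Suc i) (y ! i)" using bef_total ne by blast
      then have "(y ! i, y ! Suc i) \<in> inversions x" using lt unfolding inversions_bef by auto
      then have "(y ! i, y ! Suc i) \<in> inversions y" using assms(3) unfolding weak_le_def by auto
      then have "bef y (y ! Suc i) (y ! i)" unfolding inversions_bef by auto
      then show False using byy bef_asym dy by blast
    qed
  qed
  have "bef y c d \<Longrightarrow> bef x c d" for c d
    using bef_chain[OF dx _ ] adj sx by auto
  then have "inversions y \<subseteq> inversions x" unfolding inversions_bef by auto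
  then have "inversions x = inversions y" using assms(3) unfolding weak_le_def by auto
  then show False using inv_eq_imp_eq assms by blast
qed

lemma inversions_swp:
  assumes "distinct xs" "Suc d < length xs" "xs ! d > xs ! Suc d"
  shows "inversions (swp xs d) = inversions xs - {(xs ! Suc d, xs ! d)}"
proof -
  define a where "a = xs ! Suc d"
  define b where "b = xs ! d"
  have H: "\<And>c e. bef (swp xs d) c e \<longleftrightarrow> (bef xs c e \<and> \<not> (c = b \<and> e = a)) \<or> (c = a \<and> e = b)"
    using bef_swp[OF assms(1,2)] unfolding a_def b_def by blast
  have ab: "a < b" using assms(3) unfolding a_def b_def by simp
  show ?thesis unfolding inversions_bef a_def[symmetric] b_def[symmetric] H using ab by auto
qed

lemma swp_perms: "x \<in> perms n \<Longrightarrow> Suc d < length x \<Longrightarrow> swp x d \<in> perms n"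
  unfolding perms_def by auto

lemma pair_in_inv: "distinct xs \<Longrightarrow> Suc d < length xs \<Longrightarrow> xs ! d > xs ! Suc d \<Longrightarrow>
  (xs ! Suc d, xs ! d) \<in> inversions xs"
  unfolding inversions_bef bef_def by auto



definition prs :: "nat \<Rightarrow> (nat \<times> nat) set" where
  "prs n = {(a, b). a < b \<and> a \<in> {1..n} \<and> b \<in> {1..n}}"

lemma inv_sub: "x \<in> perms n \<Longrightarrow> inversions x \<subseteq> prs n"
  unfolding inversions_bef prs_def using perms_D by (auto dest: bef_set)

lemma inv_trans: "distinct x \<Longrightarrow> (a, b) \<in> inversions x \<Longrightarrow> (b, c) \<in> inversions x \<Longrightarrow> (a, c) \<in> inversions x"
  unfolding inversions_bef using bef_trans by auto

lemma inv_cotrans: "distinct x \<Longrightarrow> (a, c) \<in> inversions x \<Longrightarrow> a < b \<Longrightarrow> b < c \<Longrightarrow> b \<in> set x \<Longrightarrow>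
   (a, b) \<in> inversions x \<or> (b, c) \<in> inversions x"
  unfolding inversions_bef using bef_trans bef_total bef_set by (smt (verit) case_prodD case_prodI mem_Collect_eq nat_neq_iff)

lemma trancl_cotrans:
  assumes "(a, c) \<in> R\<^sup>+"
    and cot: "\<And>a b c. (a, c) \<in> R \<Longrightarrow> a < b \<Longrightarrow> b < c \<Longrightarrow> b \<in> V \<Longrightarrow> (a, b) \<in> R \<or> (b, c) \<in> R"
    and inc: "\<And>a b. (a, b) \<in> R \<Longrightarrow> a < (b::nat)"
  shows "a < b \<Longrightarrow> b < c \<Longrightarrow> b \<in> V \<Longrightarrow> (a, b) \<in> R\<^sup>+ \<or> (b, c) \<in> R\<^sup>+"
  using assms(1)
proof (induction arbitrary: b rule: trancl_induct)
  case (base y)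
  then show ?case using cot by blast
next
  case (step d c)
  consider "b < d" | "b = d" | "d < b" by arith
  then show ?case
  proof cases
    case 1
    then have "(a, b) \<in> R\<^sup>+ \<or> (b, d) \<in> R\<^sup>+" using step by blast
    then show ?thesis using step(2) by (meson trancl.trancl_into_trancl)
  next
    case 2
    then show ?thesis using step by blast
  next
    case 3
    then have "(d, b) \<in> R \<or> (b, c) \<in> R" using cot step by blast
    then show ?thesis using step(1) by (meson r_into_trancl' trancl.trancl_into_trancl)
  qed
qed

lemma trancl_inc: "(a, b) \<in> R\<^sup>+ \<Longrightarrow> (\<And>a b. (a, b) \<in> R \<Longrightarrow> a < (b::nat)) \<Longrightarrow> a < b"
  by (induction rule: trancl_induct) force+

lemma exists_min_prec:
  assumes "finite V" "V \<noteq> {}"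
    and irr: "\<And>c. c \<in> V \<Longrightarrow> \<not> prec c c"
    and tr: "\<And>c d e. c \<in> V \<Longrightarrow> d \<in> V \<Longrightarrow> e \<in> V \<Longrightarrow> prec c d \<Longrightarrow> prec d e \<Longrightarrow> prec c e"
  shows "\<exists>m\<in>V. \<forall>u\<in>V. \<not> prec u m"
proof -
  define f where "f m = card {u \<in> V. prec u m}" for m
  obtain m0 where "m0 \<in> V" using assms(2) by blast
  obtain m where m: "m \<in> V" "\<forall>y. y \<in> V \<longrightarrow> f m \<le> f y"
    using ex_has_least_nat[of "\<lambda>m. m \<in> V" m0 f] \<open>m0 \<in> V\<close> by blast
  have "\<forall>u\<in>V. \<not> prec u m"
  proof (intro ballI notI)
    fix u assume u: "u \<in> V" "prec u m"
    have "{w \<in> V. prec w u} \<subset> {w \<in> V. prec w m}"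
      using u tr irr m(1) by blast
    then have "f u < f m" unfolding f_def using assms(1) by (simp add: psubset_card_mono)
    then show False using m(2) u(1) by force
  qed
  then show ?thesis using m(1) by blast
qed

lemma exists_list_prec:
  assumes "finite V"
    and irr: "\<And>c. c \<in> V \<Longrightarrow> \<not> prec c c"
    and tr: "\<And>c d e. c \<in> V \<Longrightarrow> d \<in> V \<Longrightarrow> e \<in> V \<Longrightarrow> prec c d \<Longrightarrow> prec d e \<Longrightarrow> prec c e"
    and tot: "\<And>c d. c \<in> V \<Longrightarrow> d \<in> V \<Longrightarrow> c \<noteq> d \<Longrightarrow> prec c d \<or> prec d c"
  shows "\<exists>xs. distinct xs \<and> set xs = V \<and> (\<forall>c\<in>V. \<forall>d\<in>V. bef xs c d \<longleftrightarrow> prec c d)"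
  using assms
proof (induction "card V" arbitrary: V)
  case 0
  then show ?case by (rule_tac x="[]" in exI) auto
next
  case (Suc k)
  have ne: "V \<noteq> {}" using Suc.hyps(2) by (metis card.empty nat.simps(3))
  have "\<exists>m\<in>V. \<forall>u\<in>V. \<not> prec u m"
    by (rule exists_min_prec[OF Suc.prems(1) ne]) (use Suc.prems(2,3) in blast)+
  then obtain m where m: "m \<in> V" "\<forall>u\<in>V. \<not> prec u m" by blast
  have kc: "k = card (V - {m})" using Suc.hyps(2) m(1) Suc.prems(1) by simp
  have "\<exists>xs. distinct xs \<and> set xs = V - {m} \<and> (\<forall>c\<in>V - {m}. \<forall>d\<in>V - {m}. bef xs c d \<longleftrightarrow> prec c d)"
  proof (rule Suc.hyps(1)[OF kc])
    show "finite (V - {m})" using Suc.prems(1) by simp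
    show "\<And>c. c \<in> V - {m} \<Longrightarrow> \<not> prec c c" using Suc.prems(2) by blast
    show "\<And>c d e. c \<in> V - {m} \<Longrightarrow> d \<in> V - {m} \<Longrightarrow> e \<in> V - {m} \<Longrightarrow> prec c d \<Longrightarrow> prec d e \<Longrightarrow> prec c e"
      using Suc.prems(3) by blast
    show "\<And>c d. c \<in> V - {m} \<Longrightarrow> d \<in> V - {m} \<Longrightarrow> c \<noteq> d \<Longrightarrow> prec c d \<or> prec d c"
      using Suc.prems(4) by blast
  qed
  then obtain xs where xs: "distinct xs" "set xs = V - {m}" "\<forall>c\<in>V - {m}. \<forall>d\<in>V - {m}. bef xs c d \<longleftrightarrow> prec c d"
    by blast
  show ?case
  proof (rule exI[of _ "m # xs"], intro conjI ballI)
    show "distinct (m # xs)" using xs by auto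
    show "set (m # xs) = V" using xs m by auto
    fix c d assume c: "c \<in> V" and d: "d \<in> V"
    show "bef (m # xs) c d \<longleftrightarrow> prec c d"
    proof (cases "c = m")
      case True
      have "\<not> bef xs m d" using xs(2) bef_set by blast
      moreover have "prec m d \<longleftrightarrow> d \<noteq> m" using Suc.prems(2)[of m] Suc.prems(4)[of m d] m d by blast
      ultimately show ?thesis unfolding bef_Cons using True xs(2) d by auto
    next
      case False
      show ?thesis
      proof (cases "d = m")
        case True
        have "\<not> bef xs c m" using xs(2) bef_set by blast
        then show ?thesis unfolding bef_Cons using True False m(2) c by auto
      next
        case F2: False
        then show ?thesis unfolding bef_Cons using False xs(3) c d by auto
      qed
    qed
  qed
qed

lemma join_exists:
  assumes "x \<in> perms n" "y \<in> perms n"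
  shows "\<exists>z \<in> perms n. inversions z = (inversions x \<union> inversions y)\<^sup>+"
proof -
  define R where "R = inversions x \<union> inversions y"
  define T where "T = R\<^sup>+"
  have dx: "distinct x" "set x = {1..n}" and dy: "distinct y" "set y = {1..n}" using assms perms_D by auto
  have Rsub: "R \<subseteq> prs n" unfolding R_def using inv_sub assms by auto
  have "trans (prs n)" unfolding trans_def prs_def by auto
  then have Tsub: "T \<subseteq> prs n" unfolding T_def using Rsub by (metis trancl_id trancl_mono_subset)
  have Ttr: "(a, b) \<in> T \<Longrightarrow> (b, c) \<in> T \<Longrightarrow> (a, c) \<in> T" for a b c
    unfolding T_def by auto
  have Rcot: "(a, c) \<in> R \<Longrightarrow> a < b \<Longrightarrow> b < c \<Longrightarrow> b \<in> {1..n} \<Longrightarrow> (a, b) \<in> R \<or> (b, c) \<in> R" for a b c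
    unfolding R_def using inv_cotrans dx dy by blast
  have Tcot: "(a, c) \<in> T \<Longrightarrow> a < b \<Longrightarrow> b < c \<Longrightarrow> b \<in> {1..n} \<Longrightarrow> (a, b) \<in> T \<or> (b, c) \<in> T" for a b c
    unfolding T_def using trancl_cotrans[of a c R "{1..n}" b] Rcot Rsub unfolding prs_def by blast
  define prec where "prec c d \<longleftrightarrow> (d < c \<and> (d, c) \<in> T) \<or> (c < d \<and> (c, d) \<notin> T)" for c d
  have Tin: "(a, b) \<in> T \<Longrightarrow> a < b \<and> a \<in> {1..n} \<and> b \<in> {1..n}" for a b using Tsub unfolding prs_def by auto
  have "\<exists>xs. distinct xs \<and> set xs = {1..n} \<and> (\<forall>c\<in>{1..n}. \<forall>d\<in>{1..n}. bef xs c d \<longleftrightarrow> prec c d)"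
  proof (rule exists_list_prec)
    show "finite {1..n}" by simp
    show "\<And>c. \<not> prec c c" unfolding prec_def by simp
    show "\<And>c d. c \<noteq> d \<Longrightarrow> prec c d \<or> prec d c" unfolding prec_def by auto
    fix c d e assume c: "c \<in> {1..n}" and d: "d \<in> {1..n}" and e: "e \<in> {1..n}" and cd: "prec c d" and de: "prec d e"
    show "prec c e"
    proof -
      consider "c < d" "d < e" | "c < d" "e < d" | "d < c" "d < e" | "d < c" "e < d"
        using cd de unfolding prec_def by auto
      then show ?thesis
      proof cases
        case 1
        then show ?thesis using cd de Tcot[of c e d] Tin d unfolding prec_def by auto
      next
        case 2
        then show ?thesis using cd de Tcot[of e d c] Ttr[of c e d] c unfolding prec_def
          by (cases c e rule: linorder_cases) auto
      next
        case 3
        then show ?thesis using cd de Tcot[of d c e] Ttr[of d c e] e unfolding prec_def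
          by (cases c e rule: linorder_cases) auto
      next
        case 4
        then show ?thesis using cd de Ttr[of e d c] unfolding prec_def by auto
      qed
    qed
  qed
  then obtain z where z: "distinct z" "set z = {1..n}" "\<forall>c\<in>{1..n}. \<forall>d\<in>{1..n}. bef z c d \<longleftrightarrow> prec c d" by blast
  have "inversions z = T"
  proof -
    have "inversions z = {(a, b). a < b \<and> a \<in> {1..n} \<and> b \<in> {1..n} \<and> prec b a}"
    proof -
      have B: "bef z b a \<longleftrightarrow> a \<in> {1..n} \<and> b \<in> {1..n} \<and> prec b a" for a b
        using z(2,3) bef_set[of z b a] by blast
      show ?thesis unfolding inversions_bef B by blast
    qed
    also have "\<dots> = T" unfolding prec_def using Tin by auto
    finally show ?thesis .
  qed
  moreover have "z \<in> perms n" unfolding perms_def using z by auto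
  ultimately show ?thesis unfolding T_def R_def by blast
qed

lemma weak_le_refl: "weak_le x x" unfolding weak_le_def by simp
lemma weak_le_trans: "weak_le x y \<Longrightarrow> weak_le y z \<Longrightarrow> weak_le x z" unfolding weak_le_def by auto
lemma weak_le_antisym: "x \<in> perms n \<Longrightarrow> y \<in> perms n \<Longrightarrow> weak_le x y \<Longrightarrow> weak_le y x \<Longrightarrow> x = y"
  unfolding weak_le_def using inv_eq_imp_eq by blast

lemma join_unique:
  assumes "z \<in> perms n" "weak_le x z" "weak_le y z" "\<forall>w\<in>perms n. weak_le x w \<and> weak_le y w \<longrightarrow> weak_le z w"
  shows "weak_join n x y = z"
  unfolding weak_join_def
  by (rule the_equality) (use assms weak_le_antisym in blast)+

lemma meet_unique:
  assumes "z \<in> perms n" "weak_le z x" "weak_le z y" "\<forall>w\<in>perms n. weak_le w x \<and> weak_le w y \<longrightarrow> weak_le w z"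
  shows "weak_meet n x y = z"
  unfolding weak_meet_def
  by (rule the_equality) (use assms weak_le_antisym in blast)+

lemma join_props:
  assumes "x \<in> perms n" "y \<in> perms n"
  shows "weak_join n x y \<in> perms n \<and> weak_le x (weak_join n x y) \<and> weak_le y (weak_join n x y) \<and>
    (\<forall>w\<in>perms n. weak_le x w \<and> weak_le y w \<longrightarrow> weak_le (weak_join n x y) w)"
proof -
  obtain z where z: "z \<in> perms n" "inversions z = (inversions x \<union> inversions y)\<^sup>+"
    using join_exists[OF assms] by blast
  have ub: "weak_le x z" "weak_le y z" unfolding weak_le_def z(2) by auto
  have least: "\<forall>w\<in>perms n. weak_le x w \<and> weak_le y w \<longrightarrow> weak_le z w"
  proof (intro ballI impI)
    fix w assume w: "w \<in> perms n" "weak_le x w \<and> weak_le y w"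
    have "inversions x \<union> inversions y \<subseteq> inversions w" using w unfolding weak_le_def by auto
    moreover have "trans (inversions w)" using inv_trans perms_D[OF w(1)] by (meson transI)
    ultimately show "weak_le z w" unfolding weak_le_def z(2)
      by (metis trancl_id trancl_mono_subset)
  qed
  have "weak_join n x y = z" using join_unique z(1) ub least by blast
  then show ?thesis using z(1) ub least by simp
qed

lemma rev_perms: "x \<in> perms n \<Longrightarrow> rev x \<in> perms n"
  unfolding perms_def by auto

lemma inv_rev: "x \<in> perms n \<Longrightarrow> inversions (rev x) = prs n - inversions x"
proof -
  assume x: "x \<in> perms n"
  have d: "distinct x" "set x = {1..n}" using perms_D[OF x] by auto
  have H: "a < b \<Longrightarrow> (bef x a b \<longleftrightarrow> a \<in> {1..n} \<and> b \<in> {1..n} \<and> \<not> bef x b a)" for a b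
    using bef_total[of a x b] bef_asym[OF d(1), of a b] bef_set[of x a b] d(2) by auto
  show ?thesis unfolding inversions_bef prs_def bef_rev using H by auto
qed

lemma weak_le_rev: "x \<in> perms n \<Longrightarrow> y \<in> perms n \<Longrightarrow> weak_le (rev x) (rev y) \<longleftrightarrow> weak_le y x"
proof -
  assume x: "x \<in> perms n" and y: "y \<in> perms n"
  show ?thesis unfolding weak_le_def inv_rev[OF x] inv_rev[OF y] using inv_sub[OF x] inv_sub[OF y] by blast
qed

lemma meet_props:
  assumes "x \<in> perms n" "y \<in> perms n"
  shows "weak_meet n x y \<in> perms n \<and> weak_le (weak_meet n x y) x \<and> weak_le (weak_meet n x y) y \<and>
    (\<forall>w\<in>perms n. weak_le w x \<and> weak_le w y \<longrightarrow> weak_le w (weak_meet n x y))"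
proof -
  define j where "j = weak_join n (rev x) (rev y)"
  have rx: "rev x \<in> perms n" "rev y \<in> perms n" using assms rev_perms by auto
  have J: "j \<in> perms n" "weak_le (rev x) j" "weak_le (rev y) j"
     "\<forall>w\<in>perms n. weak_le (rev x) w \<and> weak_le (rev y) w \<longrightarrow> weak_le j w"
    using join_props[OF rx] unfolding j_def by auto
  define z where "z = rev j"
  have zp: "z \<in> perms n" unfolding z_def using J rev_perms by auto
  have "weak_le z x" using weak_le_rev[OF assms(1) zp] J(2) unfolding z_def by simp
  moreover have "weak_le z y" using weak_le_rev[OF assms(2) zp] J(3) unfolding z_def by simp
  moreover have "\<forall>w\<in>perms n. weak_le w x \<and> weak_le w y \<longrightarrow> weak_le w z"
  proof (intro ballI impI)
    fix w assume w: "w \<in> perms n" "weak_le w x \<and> weak_le w y"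
    then have "weak_le (rev x) (rev w)" "weak_le (rev y) (rev w)"
      using weak_le_rev assms by auto
    then have "weak_le j (rev w)" using J(4) rev_perms w(1) by auto
    then show "weak_le w z" using weak_le_rev[OF zp w(1)] unfolding z_def by simp
  qed
  ultimately have "weak_meet n x y = z" using meet_unique zp by blast
  then show ?thesis using zp \<open>weak_le z x\<close> \<open>weak_le z y\<close> \<open>\<forall>w\<in>perms n. weak_le w x \<and> weak_le w y \<longrightarrow> weak_le w z\<close> by simp
qed

lemma join_le: "x \<in> perms n \<Longrightarrow> y \<in> perms n \<Longrightarrow> weak_le x y \<Longrightarrow> weak_join n x y = y"
  by (rule join_unique) (auto simp: weak_le_refl)

lemma join_le2: "x \<in> perms n \<Longrightarrow> y \<in> perms n \<Longrightarrow> weak_le x y \<Longrightarrow> weak_join n y x = y"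
  by (rule join_unique) (auto simp: weak_le_refl)

lemma meet_le: "x \<in> perms n \<Longrightarrow> y \<in> perms n \<Longrightarrow> weak_le x y \<Longrightarrow> weak_meet n x y = x"
  by (rule meet_unique) (auto simp: weak_le_refl)

lemma meet_le2: "x \<in> perms n \<Longrightarrow> y \<in> perms n \<Longrightarrow> weak_le x y \<Longrightarrow> weak_meet n y x = x"
  by (rule meet_unique) (auto simp: weak_le_refl)



section \<open>Congruence basics\<close>

lemma cong_in: "lattice_congruence n \<Theta> \<Longrightarrow> (x, y) \<in> \<Theta> \<Longrightarrow> x \<in> perms n \<and> y \<in> perms n"
  unfolding lattice_congruence_def equiv_def refl_on_def by auto

lemma cong_refl: "lattice_congruence n \<Theta> \<Longrightarrow> x \<in> perms n \<Longrightarrow> (x, x) \<in> \<Theta>"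
  unfolding lattice_congruence_def equiv_def refl_on_def by auto

lemma cong_sym: "lattice_congruence n \<Theta> \<Longrightarrow> (x, y) \<in> \<Theta> \<Longrightarrow> (y, x) \<in> \<Theta>"
  unfolding lattice_congruence_def equiv_def sym_def by auto

lemma cong_trans: "lattice_congruence n \<Theta> \<Longrightarrow> (x, y) \<in> \<Theta> \<Longrightarrow> (y, z) \<in> \<Theta> \<Longrightarrow> (x, z) \<in> \<Theta>"
  unfolding lattice_congruence_def equiv_def trans_def by blast

lemma cong_join: "lattice_congruence n \<Theta> \<Longrightarrow> (x, x') \<in> \<Theta> \<Longrightarrow> (y, y') \<in> \<Theta> \<Longrightarrow> (weak_join n x y, weak_join n x' y') \<in> \<Theta>"
  unfolding lattice_congruence_def by blast

lemma cong_meet: "lattice_congruence n \<Theta> \<Longrightarrow> (x, x') \<in> \<Theta> \<Longrightarrow> (y, y') \<in> \<Theta> \<Longrightarrow> (weak_meet n x y, weak_meet n x' y') \<in> \<Theta>"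
  unfolding lattice_congruence_def by blast

lemma cong_convex:
  assumes C: "lattice_congruence n \<Theta>" and ac: "(a, c) \<in> \<Theta>" and b: "b \<in> perms n"
    and ab: "weak_le a b" and bc: "weak_le b c"
  shows "(b, c) \<in> \<Theta>"
proof -
  have a: "a \<in> perms n" and c: "c \<in> perms n" using cong_in[OF C ac] by auto
  have "(weak_join n b a, weak_join n b c) \<in> \<Theta>" using cong_join[OF C cong_refl[OF C b] ac] .
  moreover have "weak_join n b a = b" using join_le2[OF a b ab] .
  moreover have "weak_join n b c = c" using join_le[OF b c bc] .
  ultimately show ?thesis by simp
qed

section \<open>Covers\<close>

lemma desc_D: "d \<in> descents y \<Longrightarrow> Suc d < length y \<and> y ! d > y ! Suc d"
  unfolding descents_def by auto

lemma covers_swp: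
  assumes y: "y \<in> perms n" and d: "d \<in> descents y"
  shows "weak_covers n y (swp y d)"
proof -
  have dy: "distinct y" using perms_D[OF y] by auto
  have dd: "Suc d < length y" "y ! d > y ! Suc d" using desc_D[OF d] by auto
  have sp: "swp y d \<in> perms n" using swp_perms[OF y dd(1)] .
  have I: "inversions (swp y d) = inversions y - {(y ! Suc d, y ! d)}"
    using inversions_swp[OF dy dd] .
  have p: "(y ! Suc d, y ! d) \<in> inversions y" using pair_in_inv[OF dy dd] .
  show ?thesis unfolding weak_covers_def
  proof (intro conjI)
    show "swp y d \<in> perms n" "y \<in> perms n" by fact+
    show "weak_le (swp y d) y" unfolding weak_le_def I by auto
    show "swp y d \<noteq> y" using I p by (metis Diff_iff singletonI)
    show "\<not> (\<exists>z\<in>perms n. weak_le (swp y d) z \<and> weak_le z y \<and> z \<noteq> swp y d \<and> z \<noteq> y)"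
    proof
      assume "\<exists>z\<in>perms n. weak_le (swp y d) z \<and> weak_le z y \<and> z \<noteq> swp y d \<and> z \<noteq> y"
      then obtain z where z: "z \<in> perms n" "weak_le (swp y d) z" "weak_le z y" "z \<noteq> swp y d" "z \<noteq> y" by blast
      have "inversions z = inversions (swp y d) \<or> inversions z = inversions y"
        using z(2,3) unfolding weak_le_def I by blast
      then show False using inv_eq_imp_eq z sp y by metis
    qed
  qed
qed

lemma covers_iff:
  assumes y: "y \<in> perms n"
  shows "weak_covers n y x \<longleftrightarrow> (\<exists>d\<in>descents y. x = swp y d)"
proof
  assume cv: "weak_covers n y x"
  then have x: "x \<in> perms n" and le: "weak_le x y" and ne: "x \<noteq> y"
    and nz: "\<not> (\<exists>z\<in>perms n. weak_le x z \<and> weak_le z y \<and> z \<noteq> x \<and> z \<noteq> y)"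
    unfolding weak_covers_def by auto
  obtain d where d: "d \<in> descents y" "(y ! Suc d, y ! d) \<notin> inversions x"
    using descent_exists[OF x y le ne] by blast
  have dy: "distinct y" using perms_D[OF y] by auto
  have dd: "Suc d < length y" "y ! d > y ! Suc d" using desc_D[OF d(1)] by auto
  have sp: "swp y d \<in> perms n" using swp_perms[OF y dd(1)] .
  have I: "inversions (swp y d) = inversions y - {(y ! Suc d, y ! d)}"
    using inversions_swp[OF dy dd] .
  have "weak_le x (swp y d)" using le d(2) unfolding weak_le_def I by auto
  moreover have "weak_le (swp y d) y" unfolding weak_le_def I by auto
  moreover have "swp y d \<noteq> y" using I pair_in_inv[OF dy dd] by (metis Diff_iff singletonI)
  ultimately have "x = swp y d" using nz sp by blast
  then show "\<exists>d\<in>descents y. x = swp y d" using d(1) by blast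
next
  assume "\<exists>d\<in>descents y. x = swp y d"
  then show "weak_covers n y x" using covers_swp[OF y] by blast
qed

lemma covers_no_between:
  assumes "weak_covers n y x" "z \<in> perms n" "weak_le x z" "weak_le z y"
  shows "z = x \<or> z = y"
  using assms unfolding weak_covers_def by blast

section \<open>Join-irreducibles\<close>

lemma JI_desc: "join_irreducible n g \<Longrightarrow> \<exists>d. descents g = {d}"
  unfolding join_irreducible_def by (simp add: card_1_singleton_iff)

lemma JI_lower:
  assumes "join_irreducible n g" "descents g = {d}"
  shows "lower_cover n g = swp g d"
proof -
  have g: "g \<in> perms n" using assms(1) unfolding join_irreducible_def by auto
  show ?thesis unfolding lower_cover_def
    by (rule the_equality) (use covers_iff[OF g] assms(2) in auto)
qed

lemma JI_below:
  assumes "join_irreducible n g" "descents g = {d}" "w \<in> perms n" "weak_le w g" "w \<noteq> g"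
  shows "weak_le w (swp g d)"
proof -
  have g: "g \<in> perms n" using assms(1) unfolding join_irreducible_def by auto
  obtain d' where d': "d' \<in> descents g" "(g ! Suc d', g ! d') \<notin> inversions w"
    using descent_exists[OF assms(3) g assms(4,5)] by blast
  then have "d' = d" using assms(2) by auto
  have dg: "distinct g" using perms_D[OF g] by auto
  have dd: "Suc d < length g" "g ! d > g ! Suc d" using desc_D assms(2) by auto
  show ?thesis using assms(4) d' \<open>d' = d\<close> inversions_swp[OF dg dd] unfolding weak_le_def by auto
qed

section \<open>The join-irreducible with a given subset\<close>

definition jset :: "nat \<Rightarrow> nat set \<Rightarrow> bool" where
  "jset n B \<longleftrightarrow> B \<subseteq> {1..n} \<and> (\<exists>b\<in>B. \<exists>c\<in>{1..n} - B. b < c)"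

lemma jirr_perm:
  assumes "B \<subseteq> {1..n}"
  shows "jirr_of n B \<in> perms n"
proof -
  have f: "finite B" using assms finite_subset by blast
  show ?thesis unfolding perms_def jirr_of_def using assms f by auto
qed

lemma jirr_inv:
  assumes "B \<subseteq> {1..n}"
  shows "inversions (jirr_of n B) = {(a, c). a < c \<and> a \<in> B \<and> c \<in> {1..n} - B}"
proof -
  have f: "finite B" using assms finite_subset by blast
  have B: "bef (jirr_of n B) x y \<longleftrightarrow> (x \<in> {1..n} - B \<and> y \<in> {1..n} - B \<and> x < y) \<or> (x \<in> B \<and> y \<in> B \<and> x < y) \<or>
      (x \<in> {1..n} - B \<and> y \<in> B)" for x y
    unfolding jirr_of_def bef_append using f by (simp add: bef_sorted)
  show ?thesis unfolding inversions_bef B using assms by auto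
qed

lemma Max_sorted_last:
  assumes "finite S" "S \<noteq> {}"
  shows "sorted_list_of_set S ! (card S - 1) = Max S"
proof -
  define L where "L = sorted_list_of_set S"
  have L: "sorted_wrt (<) L" "set L = S" "length L = card S" unfolding L_def using assms
    by (auto simp: strict_sorted_list_of_set)
  have cp: "card S > 0" using assms by (simp add: card_gt_0_iff)
  have "L ! (card S - 1) \<in> S" using L cp by (metis diff_less nth_mem zero_less_one)
  moreover have "x \<le> L ! (card S - 1)" if "x \<in> S" for x
  proof -
    have "x \<in> set L" using that L(2) by simp
    then obtain i where i: "i < length L" "L ! i = x" by (auto simp: in_set_conv_nth)
    show ?thesis
    proof (cases "i = card S - 1")
      case True then show ?thesis using i by simp
    next
      case False
      then have "i < card S - 1" using i L(3) by auto
      then show ?thesis using sorted_wrt_nth_less[OF L(1)] i L(3) cp by fastforce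
    qed
  qed
  ultimately show ?thesis unfolding L_def[symmetric] using assms by (metis Max_eqI)
qed

lemma Min_sorted_first:
  assumes "finite S" "S \<noteq> {}"
  shows "sorted_list_of_set S ! 0 = Min S"
  using sorted_list_of_set_nonempty[OF assms] by simp

lemma jirr_desc:
  assumes "jset n B"
  defines "k \<equiv> card ({1..n} - B)"
  shows "descents (jirr_of n B) = {k - 1} \<and> jirr_of n B ! (k - 1) = Max ({1..n} - B)
     \<and> jirr_of n B ! k = Min B \<and> 0 < k \<and> k < n"
proof -
  have Bs: "B \<subseteq> {1..n}" and ex: "\<exists>b\<in>B. \<exists>c\<in>{1..n} - B. b < c" using assms(1) unfolding jset_def by auto
  define C where "C = {1..n} - B"
  have fB: "finite B" using Bs finite_subset by blast
  have fC: "finite C" unfolding C_def by simp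
  have neB: "B \<noteq> {}" and neC: "C \<noteq> {}" using ex unfolding C_def by auto
  define L1 where "L1 = sorted_list_of_set C"
  define L2 where "L2 = sorted_list_of_set B"
  have L1: "sorted_wrt (<) L1" "set L1 = C" "length L1 = k" unfolding L1_def k_def C_def
    by (auto simp: strict_sorted_list_of_set)
  have L2: "sorted_wrt (<) L2" "set L2 = B" "length L2 = card B" unfolding L2_def using fB
    by (auto simp: strict_sorted_list_of_set)
  have cB: "card B > 0" using fB neB by (simp add: card_gt_0_iff)
  have kp: "0 < k" using fC neC unfolding k_def C_def[symmetric] by (simp add: card_gt_0_iff)
  have j: "jirr_of n B = L1 @ L2" unfolding jirr_of_def L1_def L2_def C_def by simp
  have len: "length (jirr_of n B) = n" using perms_D[OF jirr_perm[OF Bs]] by simp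
  have kn: "k + card B = n" using len j L1 L2 by simp
  have last1: "L1 ! (k - 1) = Max C" using Max_sorted_last[OF fC neC] unfolding L1_def k_def C_def by simp
  have first2: "L2 ! 0 = Min B" using Min_sorted_first[OF fB neB] unfolding L2_def by simp
  have MC: "Max C > Min B"
  proof -
    obtain b c where "b \<in> B" "c \<in> C" "b < c" using ex unfolding C_def by blast
    then show ?thesis using Min_le[OF fB] Max_ge[OF fC] by (meson le_less_trans less_le_trans)
  qed
  have nth1: "jirr_of n B ! (k - 1) = Max C" using j last1 L1(3) kp by (simp add: nth_append)
  have nth2: "jirr_of n B ! k = Min B" using j first2 L1(3) by (simp add: nth_append)
  have "descents (jirr_of n B) = {k - 1}"
  proof
    show "{k - 1} \<subseteq> descents (jirr_of n B)"
      using nth1 nth2 MC kp cB kn len unfolding descents_def by auto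
    show "descents (jirr_of n B) \<subseteq> {k - 1}"
    proof
      fix i assume i: "i \<in> descents (jirr_of n B)"
      then have i1: "Suc i < n" and i2: "jirr_of n B ! i > jirr_of n B ! Suc i"
        unfolding descents_def len by auto
      show "i \<in> {k - 1}"
      proof (rule ccontr)
        assume "i \<notin> {k - 1}"
        then have "i \<noteq> k - 1" by simp
        then consider "Suc i < k" | "k \<le> i" using kp by linarith
        then show False
        proof cases
          case 1
          then have "L1 ! i < L1 ! Suc i" using sorted_wrt_nth_less[OF L1(1)] L1(3) by auto
          then show False using i2 j 1 L1(3) by (simp add: nth_append)
        next
          case 2
          then have "L2 ! (i - k) < L2 ! (Suc i - k)" using sorted_wrt_nth_less[OF L2(1)] L2(3) i1 kn by auto
          then show False using i2 j 2 L1(3) by (simp add: nth_append Suc_diff_le)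
        qed
      qed
    qed
  qed
  then show ?thesis using nth1 nth2 kp kn cB unfolding C_def by simp
qed

lemma jirr_JI:
  assumes "jset n B"
  shows "join_irreducible n (jirr_of n B) \<and> assoc_subset (jirr_of n B) = B"
proof -
  define k where "k = card ({1..n} - B)"
  have D: "descents (jirr_of n B) = {k - 1}" "0 < k" using jirr_desc[OF assms] unfolding k_def by auto
  have Bs: "B \<subseteq> {1..n}" using assms unfolding jset_def by auto
  have fB: "finite B" using Bs finite_subset by blast
  have "assoc_subset (jirr_of n B) = set (drop k (jirr_of n B))"
    unfolding assoc_subset_def D(1) using D(2) by simp
  also have "\<dots> = B" unfolding jirr_of_def k_def using fB by simp
  finally show ?thesis unfolding join_irreducible_def using jirr_perm[OF Bs] D(1) by simp
qed

lemma jirr_lower: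
  assumes "jset n B"
  shows "lower_cover n (jirr_of n B) \<in> perms n \<and>
    inversions (lower_cover n (jirr_of n B)) = inversions (jirr_of n B) - {(Min B, Max ({1..n} - B))}"
proof -
  define k where "k = card ({1..n} - B)"
  have D: "descents (jirr_of n B) = {k - 1}" "jirr_of n B ! (k - 1) = Max ({1..n} - B)"
    "jirr_of n B ! k = Min B" "0 < k" using jirr_desc[OF assms] unfolding k_def by auto
  have Bs: "B \<subseteq> {1..n}" using assms unfolding jset_def by auto
  have JI: "join_irreducible n (jirr_of n B)" using jirr_JI[OF assms] by simp
  have lc: "lower_cover n (jirr_of n B) = swp (jirr_of n B) (k - 1)" using JI_lower[OF JI D(1)] .
  have p: "jirr_of n B \<in> perms n" using jirr_perm[OF Bs] .
  have dd: "Suc (k - 1) < length (jirr_of n B)" "jirr_of n B ! (k - 1) > jirr_of n B ! Suc (k - 1)"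
    using desc_D[of "k - 1" "jirr_of n B"] D(1) by auto
  have "Suc (k - 1) = k" using D(4) by simp
  then show ?thesis unfolding lc using swp_perms[OF p dd(1)] inversions_swp[OF _ dd] perms_D[OF p] D(2,3)
    by simp
qed

lemma JI_is_jirr:
  assumes "join_irreducible n g"
  shows "jset n (assoc_subset g) \<and> g = jirr_of n (assoc_subset g)"
proof -
  obtain d where d: "descents g = {d}" using JI_desc[OF assms] by blast
  have g: "g \<in> perms n" using assms unfolding join_irreducible_def by auto
  have dg: "distinct g" "set g = {1..n}" "length g = n" using perms_D[OF g] by auto
  have dd: "Suc d < length g" "g ! d > g ! Suc d" using desc_D[of d g] d by auto
  define A where "A = assoc_subset g"
  have A: "A = set (drop (Suc d) g)" unfolding A_def assoc_subset_def d by simp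
  have ne: "g ! i < g ! Suc i" if "Suc i < length g" "i \<noteq> d" for i
  proof -
    have "i \<notin> descents g" using d that by auto
    then have "\<not> g ! i > g ! Suc i" using that unfolding descents_def by auto
    moreover have "g ! i \<noteq> g ! Suc i" using dg(1) that by (simp add: nth_eq_iff_index_eq)
    ultimately show ?thesis by simp
  qed
  have s1: "sorted (take (Suc d) g)"
    unfolding sorted_iff_nth_Suc using ne dd(1) by (simp, metis less_imp_le_nat Suc_lessD less_trans_Suc
        Suc_less_eq nat_neq_iff order_less_irrefl)
  have s2: "sorted (drop (Suc d) g)"
    unfolding sorted_iff_nth_Suc using ne dd(1) by (simp add: less_imp_le)
  have gs: "g = take (Suc d) g @ drop (Suc d) g" by simp
  have st: "set (take (Suc d) g) = {1..n} - A"
    using dg(1,2) gs A by (metis Diff_triv distinct_append set_append Un_Diff disjoint_iff_not_equal Diff_cancel sup_bot.right_neutral)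
  have As: "A \<subseteq> {1..n}" using A dg(2) by (metis set_drop_subset)
  have fA: "finite A" using A by simp
  have "take (Suc d) g = sorted_list_of_set ({1..n} - A)"
    by (rule sorted_distinct_set_unique) (use s1 st dg(1) in auto)
  moreover have "drop (Suc d) g = sorted_list_of_set A"
    by (rule sorted_distinct_set_unique) (use s2 A dg(1) fA in auto)
  ultimately have "g = jirr_of n A" unfolding jirr_of_def by (metis gs)
  moreover have "jset n A"
  proof -
    have "g ! d \<in> set (take (Suc d) g)" using dd(1) by (simp add: in_set_conv_nth) (metis lessI Suc_lessD nth_take)
    moreover have "g ! Suc d \<in> A" unfolding A using dd(1) by (simp add: in_set_drop_conv) blast
    ultimately show ?thesis unfolding jset_def using As st dd(2) by blast
  qed
  ultimately show ?thesis unfolding A_def by simp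
qed



definition lab :: "nat \<Rightarrow> nat list \<Rightarrow> nat \<Rightarrow> nat set" where
  "lab N y d = {y ! Suc d} \<union> {c \<in> set (drop (Suc (Suc d)) y). y ! Suc d < c \<and> c < y ! d} \<union> {c. y ! d < c \<and> c \<le> N}"

lemma lab_props:
  assumes y: "y \<in> perms N" and d: "d \<in> descents y"
  defines "a \<equiv> y ! Suc d" and "b \<equiv> y ! d"
  shows "jset N (lab N y d) \<and> Min (lab N y d) = a \<and> Max ({1..N} - lab N y d) = b \<and>
    inversions (jirr_of N (lab N y d)) \<subseteq> inversions y \<and> (a, b) \<in> inversions (jirr_of N (lab N y d))"
proof -
  have dy: "distinct y" "set y = {1..N}" "length y = N" using perms_D[OF y] by auto
  have dd: "Suc d < length y" "b > a" using desc_D[OF d] unfolding a_def b_def by auto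
  define B where "B = lab N y d"
  have aN: "a \<in> {1..N}" "b \<in> {1..N}" using dy(2) dd(1) unfolding a_def b_def by (auto intro: nth_mem[of _ y, simplified dy(2)])
  have Bdef: "B = {a} \<union> {c \<in> set (drop (Suc (Suc d)) y). a < c \<and> c < b} \<union> {c. b < c \<and> c \<le> N}"
    unfolding B_def lab_def a_def b_def by simp
  have Bs: "B \<subseteq> {1..N}"
  proof -
    have "set (drop (Suc (Suc d)) y) \<subseteq> {1..N}" using dy(2) by (metis set_drop_subset)
    then show ?thesis unfolding Bdef using aN dd by auto
  qed
  have aB: "a \<in> B" unfolding Bdef by simp
  have bB: "b \<notin> B" unfolding Bdef using dd by auto
  have minB: "Min B = a"
  proof (rule Min_eqI)
    show "finite B" using Bs finite_subset by blast
    show "a \<in> B" by fact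
    fix c assume "c \<in> B" then show "a \<le> c" unfolding Bdef using dd by auto
  qed
  have maxC: "Max ({1..N} - B) = b"
  proof (rule Max_eqI)
    show "finite ({1..N} - B)" by simp
    show "b \<in> {1..N} - B" using aN bB by simp
    fix c assume "c \<in> {1..N} - B" then show "c \<le> b" unfolding Bdef by auto
  qed
  have js: "jset N B" unfolding jset_def using Bs aB bB aN dd by blast
  have IJ: "inversions (jirr_of N B) = {(u, v). u < v \<and> u \<in> B \<and> v \<in> {1..N} - B}" using jirr_inv[OF Bs] .
  have sub: "inversions (jirr_of N B) \<subseteq> inversions y"
  proof
    fix p assume "p \<in> inversions (jirr_of N B)"
    then obtain c e where p: "p = (c, e)" "c < e" "c \<in> B" "e \<in> {1..N}" "e \<notin> B" unfolding IJ by auto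
    have eb: "e \<le> b" using p(4,5) unfolding Bdef by auto
    have cpos: "\<exists>jc. Suc d \<le> jc \<and> jc < length y \<and> y ! jc = c"
    proof -
      from p(3) consider "c = a" | "c \<in> set (drop (Suc (Suc d)) y)" | "b < c" unfolding Bdef by auto
      then show ?thesis
      proof cases
        case 1 then show ?thesis using dd(1) unfolding a_def by blast
      next
        case 2
        then obtain j where "Suc (Suc d) \<le> j" "j < length y" "y ! j = c" by (auto simp: in_set_drop_conv)
        then show ?thesis by (intro exI[of _ j]) auto
      next
        case 3 then show ?thesis using p(2) eb by auto
      qed
    qed
    then obtain jc where jc: "Suc d \<le> jc" "jc < length y" "y ! jc = c" by blast
    have "bef y e c"
    proof (cases "e = b")
      case True
      then show ?thesis unfolding bef_def b_def using jc by (metis Suc_le_lessD)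
    next
      case False
      have "a \<le> c" using p(3) unfolding Bdef using dd by auto
      then have ab: "a < e" "e < b" using eb p(2) False by auto
      obtain je where je: "je < length y" "y ! je = e" using p(4) dy(2) by (metis in_set_conv_nth)
      have "e \<notin> set (drop (Suc (Suc d)) y)" using p(5) ab unfolding Bdef by auto
      then have "je < Suc (Suc d)" using je by (auto simp: in_set_drop_conv)
      moreover have "je \<noteq> d" using False je unfolding b_def by auto
      moreover have "je \<noteq> Suc d" using ab je unfolding a_def by auto
      ultimately have "je < d" by auto
      then show ?thesis unfolding bef_def using je jc by (metis Suc_le_lessD less_trans)
    qed
    then show "p \<in> inversions y" unfolding inversions_bef using p by auto
  qed
  have "(a, b) \<in> inversions (jirr_of N B)" unfolding IJ using dd aB bB aN by auto
  then show ?thesis using js minB maxC sub unfolding B_def by simp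
qed

lemma edge_to_label:
  assumes C: "lattice_congruence N \<Theta>" and y: "y \<in> perms N" and d: "d \<in> descents y"
    and e: "(swp y d, y) \<in> \<Theta>"
  shows "contracts N \<Theta> (jirr_of N (lab N y d))"
proof -
  define B where "B = lab N y d"
  define J where "J = jirr_of N B"
  define x where "x = swp y d"
  have LP: "jset N B" "Min B = y ! Suc d" "Max ({1..N} - B) = y ! d" "inversions J \<subseteq> inversions y"
     "(y ! Suc d, y ! d) \<in> inversions J"
    using lab_props[OF y d] unfolding B_def J_def by auto
  have dy: "distinct y" using perms_D[OF y] by auto
  have dd: "Suc d < length y" "y ! d > y ! Suc d" using desc_D[OF d] by auto
  have Ix: "inversions x = inversions y - {(y ! Suc d, y ! d)}" unfolding x_def using inversions_swp[OF dy dd] .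
  have xp: "x \<in> perms N" unfolding x_def using swp_perms[OF y dd(1)] .
  have Bs: "B \<subseteq> {1..N}" using LP(1) unfolding jset_def by auto
  have Jp: "J \<in> perms N" unfolding J_def using jirr_perm[OF Bs] .
  have Jy: "weak_le J y" using LP(4) unfolding weak_le_def .
  define k where "k = card ({1..N} - B)"
  have D: "descents J = {k - 1}" unfolding J_def k_def using jirr_desc[OF LP(1)] by auto
  have JI: "join_irreducible N J" unfolding J_def using jirr_JI[OF LP(1)] by auto
  have lc: "lower_cover N J = swp J (k - 1)" using JI_lower[OF JI D] .
  define w where "w = weak_meet N J x"
  have W: "w \<in> perms N" "weak_le w J" "weak_le w x" unfolding w_def using meet_props[OF Jp xp] by auto
  have "(weak_meet N J x, weak_meet N J y) \<in> \<Theta>" using cong_meet[OF C cong_refl[OF C Jp] e[folded x_def]] .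
  moreover have "weak_meet N J y = J" using meet_le[OF Jp y Jy] .
  ultimately have wJ: "(w, J) \<in> \<Theta>" unfolding w_def by simp
  have "w \<noteq> J"
  proof
    assume "w = J"
    then have "(y ! Suc d, y ! d) \<in> inversions x" using W(3) LP(5) unfolding weak_le_def by auto
    then show False using Ix by auto
  qed
  then have wl: "weak_le w (swp J (k - 1))" using JI_below[OF JI D W(1,2)] by simp
  have dJ: "distinct J" using perms_D[OF Jp] by auto
  have ddJ: "Suc (k - 1) < length J" "J ! (k - 1) > J ! Suc (k - 1)" using desc_D[of "k - 1" J] D by auto
  have sJp: "swp J (k - 1) \<in> perms N" using swp_perms[OF Jp ddJ(1)] .
  have sJl: "weak_le (swp J (k - 1)) J" unfolding weak_le_def using inversions_swp[OF dJ ddJ] by auto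
  have "(swp J (k - 1), J) \<in> \<Theta>" using cong_convex[OF C wJ sJp wl sJl] .
  then show ?thesis unfolding contracts_def lc[symmetric] J_def[symmetric] B_def[symmetric]
    using cong_sym[OF C] by blast
qed

lemma label_to_edge:
  assumes C: "lattice_congruence N \<Theta>" and y: "y \<in> perms N" and d: "d \<in> descents y"
    and c: "contracts N \<Theta> (jirr_of N (lab N y d))"
  shows "(swp y d, y) \<in> \<Theta>"
proof -
  define B where "B = lab N y d"
  define J where "J = jirr_of N B"
  define x where "x = swp y d"
  have LP: "jset N B" "Min B = y ! Suc d" "Max ({1..N} - B) = y ! d" "inversions J \<subseteq> inversions y"
     "(y ! Suc d, y ! d) \<in> inversions J"
    using lab_props[OF y d] unfolding B_def J_def by auto
  have dy: "distinct y" using perms_D[OF y] by auto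
  have dd: "Suc d < length y" "y ! d > y ! Suc d" using desc_D[OF d] by auto
  have Ix: "inversions x = inversions y - {(y ! Suc d, y ! d)}" unfolding x_def using inversions_swp[OF dy dd] .
  have xp: "x \<in> perms N" unfolding x_def using swp_perms[OF y dd(1)] .
  have Bs: "B \<subseteq> {1..N}" using LP(1) unfolding jset_def by auto
  have Jp: "J \<in> perms N" unfolding J_def using jirr_perm[OF Bs] .
  have L: "lower_cover N J \<in> perms N" "inversions (lower_cover N J) = inversions J - {(y ! Suc d, y ! d)}"
    using jirr_lower[OF LP(1)] LP(2,3) unfolding J_def by auto
  have Lx: "weak_le (lower_cover N J) x" unfolding weak_le_def L(2) Ix using LP(4) by auto
  have j1: "weak_join N (lower_cover N J) x = x" using join_le[OF L(1) xp Lx] .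
  define z where "z = weak_join N J x"
  have Z: "z \<in> perms N" "weak_le J z" "weak_le x z" "\<forall>w\<in>perms N. weak_le J w \<and> weak_le x w \<longrightarrow> weak_le z w"
    unfolding z_def using join_props[OF Jp xp] by auto
  have xy: "weak_le x y" unfolding weak_le_def Ix by auto
  have zy: "weak_le z y" using Z(4) y LP(4) xy unfolding weak_le_def by blast
  have cov: "weak_covers N y x" unfolding x_def using covers_swp[OF y d] .
  have "z \<noteq> x"
  proof
    assume "z = x"
    then have "(y ! Suc d, y ! d) \<in> inversions x" using Z(2) LP(5) unfolding weak_le_def by auto
    then show False using Ix by auto
  qed
  then have "z = y" using covers_no_between[OF cov Z(1,3) zy] by simp
  have "(weak_join N (lower_cover N J) x, weak_join N J x) \<in> \<Theta>"
    using cong_join[OF C _ cong_refl[OF C xp]] c cong_sym[OF C] unfolding contracts_def J_def B_def by blast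
  then show ?thesis using j1 \<open>z = y\<close> unfolding z_def x_def by simp
qed



definition ins :: "nat \<Rightarrow> nat \<Rightarrow> nat" where "ins s c = (if c < s then c else Suc c)"
definition dl :: "nat \<Rightarrow> nat \<Rightarrow> nat" where "dl s c = (if c < s then c else c - 1)"
definition smono :: "nat \<Rightarrow> (nat \<Rightarrow> nat) \<Rightarrow> bool" where
  "smono n f \<longleftrightarrow> (\<forall>i\<in>{1..n}. \<forall>j\<in>{1..n}. i < j \<longrightarrow> f i < f j)"

definition Rset :: "nat \<Rightarrow> nat set \<Rightarrow> nat \<Rightarrow> nat set" where
  "Rset n A i = (A \<inter> {1..i-1}) \<union> {i} \<union> {Suc j | j. j \<in> A \<inter> {i..n}}"
definition Lset :: "nat \<Rightarrow> nat set \<Rightarrow> nat \<Rightarrow> nat set" where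
  "Lset n A i = (A \<inter> {1..i-1}) \<union> {Suc j | j. j \<in> A \<inter> {i..n}}"

lemma R_ins_eq: "R_ins n i g = jirr_of (Suc n) (Rset n (assoc_subset g) i)"
  unfolding R_ins_def Rset_def Let_def by simp
lemma L_ins_eq: "L_ins n i g = jirr_of (Suc n) (Lset n (assoc_subset g) i)"
  unfolding L_ins_def Lset_def Let_def by simp

lemma Rset_eq:
  assumes "B \<subseteq> {1..n}" "s \<in> {1..Suc n}" "B' \<subseteq> {1..Suc n}" "s \<in> B'"
    "\<forall>c\<in>{1..n}. c \<in> B \<longleftrightarrow> ins s c \<in> B'"
  shows "Rset n B s = B'"
proof (rule set_eqI)
  fix x
  show "x \<in> Rset n B s \<longleftrightarrow> x \<in> B'"
  proof (cases "x < s")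
    case True
    then show ?thesis using assms unfolding Rset_def ins_def by (cases "x = 0") auto
  next
    case False
    show ?thesis
    proof (cases "x = s")
      case True then show ?thesis using assms unfolding Rset_def by auto
    next
      case F: False
      then obtain j where j: "x = Suc j" "s \<le> j" using False by (metis Suc_pred' linorder_neqE_nat not_less0 le_simps(3) not_less)
      have "x \<in> B' \<longleftrightarrow> (j \<in> {1..n} \<and> j \<in> B)"
        using assms(2,3,5) j unfolding ins_def by (cases "j \<le> n") auto
      then show ?thesis unfolding Rset_def using j assms(1) by auto
    qed
  qed
qed

lemma Lset_eq:
  assumes "B \<subseteq> {1..n}" "s \<in> {1..Suc n}" "B' \<subseteq> {1..Suc n}" "s \<notin> B'"
    "\<forall>c\<in>{1..n}. c \<in> B \<longleftrightarrow> ins s c \<in> B'"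
  shows "Lset n B s = B'"
proof (rule set_eqI)
  fix x
  show "x \<in> Lset n B s \<longleftrightarrow> x \<in> B'"
  proof (cases "x < s")
    case True
    then show ?thesis using assms unfolding Lset_def ins_def by (cases "x = 0") auto
  next
    case False
    show ?thesis
    proof (cases "x = s")
      case True then show ?thesis using assms unfolding Lset_def by auto
    next
      case F: False
      then obtain j where j: "x = Suc j" "s \<le> j" using False by (metis Suc_pred' linorder_neqE_nat not_less0 le_simps(3) not_less)
      have "x \<in> B' \<longleftrightarrow> (j \<in> {1..n} \<and> j \<in> B)"
        using assms(2,3,5) j unfolding ins_def by (cases "j \<le> n") auto
      then show ?thesis unfolding Lset_def using j assms(1) by auto
    qed
  qed
qed

lemma Lset_low:
  assumes "B \<subseteq> {1..n}" "finite B" "B \<noteq> {}" "i \<le> Min B"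
  shows "Lset n B i = Lset n B (Min B)"
proof -
  have mb: "\<forall>b\<in>B. Min B \<le> b" using assms(2) by simp
  have e1: "B \<inter> {1..i-1} = {}" using mb assms(4) by fastforce
  have e2: "B \<inter> {i..n} = B" using mb assms(1,4) by fastforce
  have e3: "B \<inter> {1..Min B-1} = {}" using mb by fastforce
  have e4: "B \<inter> {Min B..n} = B" using mb assms(1) by fastforce
  show ?thesis unfolding Lset_def e1 e2 e3 e4 by simp
qed

lemma Rset_high:
  assumes "B \<subseteq> {1..n}" "{Suc M..n} \<subseteq> B" "Suc M \<le> i" "i \<le> Suc n"
  shows "Rset n B i = B \<inter> {1..M} \<union> {Suc M..Suc n}"
proof (rule set_eqI)
  fix x
  show "x \<in> Rset n B i \<longleftrightarrow> x \<in> B \<inter> {1..M} \<union> {Suc M..Suc n}"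
  proof
    assume "x \<in> Rset n B i"
    then consider "x \<in> B" "1 \<le> x" "x \<le> i - 1" | "x = i" | j where "x = Suc j" "j \<in> B" "i \<le> j" "j \<le> n"
      unfolding Rset_def by auto
    then show "x \<in> B \<inter> {1..M} \<union> {Suc M..Suc n}"
    proof cases
      case 1 then show ?thesis using assms by (cases "x \<le> M") auto
    next
      case 2 then show ?thesis using assms by auto
    next
      case 3 then show ?thesis using assms by auto
    qed
  next
    assume x: "x \<in> B \<inter> {1..M} \<union> {Suc M..Suc n}"
    show "x \<in> Rset n B i"
    proof (cases "x \<in> B \<inter> {1..M}")
      case True then show ?thesis using assms unfolding Rset_def by auto
    next
      case False
      then have xr: "Suc M \<le> x" "x \<le> Suc n" using x by auto
      consider "x < i" | "x = i" | "i < x" by arith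
      then show ?thesis
      proof cases
        case 1
        then have "x \<in> B" using xr assms(2,4) by auto
        then show ?thesis using 1 xr unfolding Rset_def by auto
      next
        case 2 then show ?thesis unfolding Rset_def by auto
      next
        case 3
        then have "x - 1 \<in> {Suc M..n}" "i \<le> x - 1" "x - 1 \<le> n" using xr assms(3) by auto
        then have "x - 1 \<in> B" "i \<le> x - 1" "x - 1 \<le> n" using assms(2) by auto
        moreover have "x = Suc (x - 1)" using 3 by auto
        ultimately have "\<exists>j. x = Suc j \<and> j \<in> B \<inter> {i..n}" by (intro exI[of _ "x - 1"]) auto
        then show ?thesis unfolding Rset_def by simp
      qed
    qed
  qed
qed



definition Hyp :: "(nat \<Rightarrow> (nat list \<times> nat list) set) \<Rightarrow> bool" where
  "Hyp \<Theta> \<longleftrightarrow> (\<forall>n g. join_irreducible n g \<and> contracts n (\<Theta> n) g \<longrightarrow>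
       (let A = assoc_subset g; m = Min A; M = Max ({1..n} - A) in
         (\<forall>i\<in>{m+1..M+1}. contracts (Suc n) (\<Theta> (Suc n)) (R_ins n i g)) \<and>
         (\<forall>i\<in>{m..M}. contracts (Suc n) (\<Theta> (Suc n)) (L_ins n i g))))"

lemma jset_facts:
  assumes "jset n B"
  shows "finite B \<and> B \<noteq> {} \<and> Min B \<in> B \<and> Max ({1..n} - B) \<in> {1..n} - B \<and> Min B < Max ({1..n} - B)
    \<and> (\<forall>b\<in>B. Min B \<le> b) \<and> (\<forall>c\<in>{1..n} - B. c \<le> Max ({1..n} - B)) \<and> B \<subseteq> {1..n}"
proof -
  have Bs: "B \<subseteq> {1..n}" and ex: "\<exists>b\<in>B. \<exists>c\<in>{1..n} - B. b < c" using assms unfolding jset_def by auto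
  have fB: "finite B" using Bs finite_subset by blast
  have fC: "finite ({1..n} - B)" by simp
  obtain b c where bc: "b \<in> B" "c \<in> {1..n} - B" "b < c" using ex by blast
  have "Min B \<le> b" using fB bc(1) by simp
  moreover have "c \<le> Max ({1..n} - B)" using fC bc(2) by simp
  ultimately have "Min B < Max ({1..n} - B)" using bc(3) by linarith
  moreover have "Min B \<in> B" using fB bc(1) Min_in by blast
  moreover have "Max ({1..n} - B) \<in> {1..n} - B" using fC bc(2) Max_in by blast
  ultimately show ?thesis using fB fC Bs bc by auto
qed

lemma step:
  assumes H: "Hyp \<Theta>" and js: "jset n B" and c: "contracts n (\<Theta> n) (jirr_of n B)"
    and s: "s \<in> {1..Suc n}" and B': "B' \<subseteq> {1..Suc n}"
    and mem: "\<forall>c\<in>{1..n}. c \<in> B \<longleftrightarrow> ins s c \<in> B'"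
    and r: "s \<in> B' \<longrightarrow> Min B < s" and l: "s \<notin> B' \<longrightarrow> s \<le> Max ({1..n} - B)"
  shows "contracts (Suc n) (\<Theta> (Suc n)) (jirr_of (Suc n) B')"
proof -
  define g where "g = jirr_of n B"
  define m where "m = Min B"
  define M where "M = Max ({1..n} - B)"
  have JF: "finite B" "B \<noteq> {}" "m \<in> B" "M \<in> {1..n} - B" "m < M" "\<forall>b\<in>B. m \<le> b" "\<forall>c\<in>{1..n} - B. c \<le> M" "B \<subseteq> {1..n}"
    using jset_facts[OF js] unfolding m_def M_def by auto
  have JI: "join_irreducible n g" "assoc_subset g = B" using jirr_JI[OF js] unfolding g_def by auto
  have HH: "(\<forall>i\<in>{m+1..M+1}. contracts (Suc n) (\<Theta> (Suc n)) (R_ins n i g)) \<and>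
         (\<forall>i\<in>{m..M}. contracts (Suc n) (\<Theta> (Suc n)) (L_ins n i g))"
    using H JI c unfolding Hyp_def g_def m_def M_def Let_def by (metis g_def)
  show ?thesis
  proof (cases "s \<in> B'")
    case True
    have RB: "Rset n B s = B'" using Rset_eq[OF JF(8) s B' True mem] .
    show ?thesis
    proof (cases "s \<le> M + 1")
      case True
      then have "s \<in> {m+1..M+1}" using r \<open>s \<in> B'\<close> unfolding m_def by auto
      then have "contracts (Suc n) (\<Theta> (Suc n)) (R_ins n s g)" using HH by blast
      then show ?thesis unfolding R_ins_eq JI(2) RB .
    next
      case False
      have hi: "{Suc M..n} \<subseteq> B"
      proof
        fix x assume x: "x \<in> {Suc M..n}"
        show "x \<in> B"
        proof (rule ccontr)
          assume "x \<notin> B"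
          then have "x \<le> M" using JF(7) x by auto
          then show False using x by auto
        qed
      qed
      have Mn: "M \<le> n" using JF(4) by auto
      have "Rset n B s = Rset n B (Suc M)"
        using Rset_high[OF JF(8) hi, of s] Rset_high[OF JF(8) hi, of "Suc M"] False s Mn by auto
      moreover have "M + 1 \<in> {m+1..M+1}" using JF(5) by auto
      then have "contracts (Suc n) (\<Theta> (Suc n)) (R_ins n (Suc M) g)" using HH by simp
      ultimately show ?thesis unfolding R_ins_eq JI(2) RB by simp
    qed
  next
    case False
    have LB: "Lset n B s = B'" using Lset_eq[OF JF(8) s B' False mem] .
    show ?thesis
    proof (cases "m \<le> s")
      case True
      then have "s \<in> {m..M}" using l False unfolding M_def by auto
      then have "contracts (Suc n) (\<Theta> (Suc n)) (L_ins n s g)" using HH by blast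
      then show ?thesis unfolding L_ins_eq JI(2) LB .
    next
      case F2: False
      have "Lset n B s = Lset n B m" using Lset_low[OF JF(8,1,2), of s] F2 unfolding m_def by simp
      moreover have "m \<in> {m..M}" using JF(5) by auto
      then have "contracts (Suc n) (\<Theta> (Suc n)) (L_ins n m g)" using HH by blast
      ultimately show ?thesis unfolding L_ins_eq JI(2) LB by simp
    qed
  qed
qed

lemma ins_dl: "t \<noteq> s \<Longrightarrow> ins s (dl s t) = t"
  unfolding ins_def dl_def by auto
lemma dl_ins: "dl s (ins s c) = c"
  unfolding ins_def dl_def by auto
lemma ins_ne: "ins s c \<noteq> s"
  unfolding ins_def by auto
lemma dl_mono: "x < y \<Longrightarrow> x \<noteq> s \<Longrightarrow> y \<noteq> s \<Longrightarrow> dl s x < dl s y"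
  unfolding dl_def by auto
lemma dl_range: "t \<in> {1..Suc N} \<Longrightarrow> s \<in> {1..Suc N} \<Longrightarrow> t \<noteq> s \<Longrightarrow> dl s t \<in> {1..N}"
  unfolding dl_def by auto
lemma ins_range: "c \<in> {1..N} \<Longrightarrow> ins s c \<in> {1..Suc N}"
  unfolding ins_def by auto

lemma smono_id:
  assumes "smono n f" "f ` {1..n} \<subseteq> {1..n}"
  shows "\<forall>k\<in>{1..n}. f k = k"
proof -
  have lo: "k \<in> {1..n} \<Longrightarrow> k \<le> f k" for k
  proof (induction k)
    case 0 then show ?case by simp
  next
    case (Suc k)
    show ?case
    proof (cases "k = 0")
      case True
      then have "f (Suc k) \<in> {1..n}" using assms(2) Suc.prems by blast
      then show ?thesis using True by simp
    next
      case False
      then have "k \<le> f k" "f k < f (Suc k)" using Suc assms(1) unfolding smono_def by auto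
      then show ?thesis by simp
    qed
  qed
  have hi: "\<forall>k. n - k = j \<longrightarrow> k \<in> {1..n} \<longrightarrow> f k + j \<le> n" for j
  proof (induction j)
    case 0
    show ?case
    proof (intro allI impI)
      fix k assume "n - k = 0" "k \<in> {1..n}"
      then have "f k \<in> {1..n}" using assms(2) by blast
      then show "f k + 0 \<le> n" by simp
    qed
  next
    case (Suc j)
    show ?case
    proof (intro allI impI)
      fix k assume k: "n - k = Suc j" "k \<in> {1..n}"
      then have "f (Suc k) + j \<le> n" using Suc.IH[rule_format, of "Suc k"] by auto
      moreover have "f k < f (Suc k)" using assms(1) k unfolding smono_def by auto
      ultimately show "f k + Suc j \<le> n" by simp
    qed
  qed
  show ?thesis
  proof
    fix k assume k: "k \<in> {1..n}"
    show "f k = k" using lo[OF k] hi[of "n - k"] k by force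
  qed
qed

lemma smono_inj: "smono n f \<Longrightarrow> inj_on f {1..n}"
  unfolding smono_def inj_on_def by (metis linorder_neqE_nat less_irrefl)

lemma full_case:
  assumes "smono n f" "f ` {1..n} \<subseteq> {1..N}" "{1..N} - f ` {1..n} = {}"
  shows "N = n \<and> (\<forall>k\<in>{1..n}. f k = k)"
proof -
  have eq: "f ` {1..n} = {1..N}" using assms(2,3) by auto
  have "card (f ` {1..n}) = n" using card_image[OF smono_inj[OF assms(1)]] by simp
  then have "N = n" using eq by simp
  then show ?thesis using smono_id[OF assms(1)] eq by simp
qed

lemma multi:
  assumes H: "Hyp \<Theta>" and js: "jset n B" and c: "contracts n (\<Theta> n) (jirr_of n B)"
  shows "smono n f \<Longrightarrow> f ` {1..n} \<subseteq> {1..N} \<Longrightarrow> B' \<subseteq> {1..N} \<Longrightarrow> (\<forall>k\<in>{1..n}. k \<in> B \<longleftrightarrow> f k \<in> B') \<Longrightarrow>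
    (\<forall>t\<in>{1..N} - f ` {1..n}. (t \<in> B' \<longrightarrow> f (Min B) < t) \<and> (t \<notin> B' \<longrightarrow> t < f (Max ({1..n} - B)))) \<Longrightarrow>
    contracts N (\<Theta> N) (jirr_of N B')"
proof (induction N arbitrary: f B')
  have JF: "finite B" "B \<noteq> {}" "Min B \<in> B" "Max ({1..n} - B) \<in> {1..n} - B" "Min B < Max ({1..n} - B)"
     "B \<subseteq> {1..n}"
    using jset_facts[OF js] by auto
  {
    fix N f B'
    assume sm: "smono n f" and fr: "f ` {1..n} \<subseteq> {1..N}" and B': "B' \<subseteq> {1..N}"
      and mem: "\<forall>k\<in>{1..n}. k \<in> B \<longleftrightarrow> f k \<in> B'" and full: "{1..N} - f ` {1..n} = {}"
    have FC: "N = n" "\<forall>k\<in>{1..n}. f k = k" using full_case[OF sm fr full] by auto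
    have "B' = B" using B' mem FC JF(6) by auto
    then have "contracts N (\<Theta> N) (jirr_of N B')" using c FC by simp
  } note fullc = this
  case 0
  then show ?case using fullc by auto
next
  case (Suc N0)
  have JF: "finite B" "B \<noteq> {}" "Min B \<in> B" "Max ({1..n} - B) \<in> {1..n} - B" "Min B < Max ({1..n} - B)"
     "B \<subseteq> {1..n}"
    using jset_facts[OF js] by auto
  define m where "m = Min B"
  define M where "M = Max ({1..n} - B)"
  show ?case
  proof (cases "{1..Suc N0} - f ` {1..n} = {}")
    case True
    have FC: "Suc N0 = n" "\<forall>k\<in>{1..n}. f k = k" using full_case[OF Suc.prems(1,2) True] by auto
    have "B' = B" using Suc.prems(3,4) FC JF(6) by auto
    then show ?thesis using c FC by simp
  next
    case False
    then obtain s where s: "s \<in> {1..Suc N0}" "s \<notin> f ` {1..n}" by blast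
    define g where "g k = dl s (f k)" for k
    define B'' where "B'' = {c \<in> {1..N0}. ins s c \<in> B'}"
    have fne: "k \<in> {1..n} \<Longrightarrow> f k \<noteq> s" for k using s(2) by auto
    have sg: "smono n g" using Suc.prems(1) fne dl_mono unfolding smono_def g_def by auto
    have gr: "g ` {1..n} \<subseteq> {1..N0}"
    proof
      fix y assume "y \<in> g ` {1..n}"
      then obtain k where k: "k \<in> {1..n}" "y = g k" by blast
      then have "f k \<in> {1..Suc N0}" using Suc.prems(2) by blast
      then show "y \<in> {1..N0}" using dl_range[of "f k" N0 s] s(1) fne[OF k(1)] k(2) unfolding g_def by blast
    qed
    have B'': "B'' \<subseteq> {1..N0}" unfolding B''_def by auto
    have insg: "k \<in> {1..n} \<Longrightarrow> ins s (g k) = f k" for k unfolding g_def using ins_dl fne by auto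
    have memg: "\<forall>k\<in>{1..n}. k \<in> B \<longleftrightarrow> g k \<in> B''"
      using Suc.prems(4) insg gr unfolding B''_def by auto
    have outg: "\<forall>t\<in>{1..N0} - g ` {1..n}. (t \<in> B'' \<longrightarrow> g (Min B) < t) \<and> (t \<notin> B'' \<longrightarrow> t < g (Max ({1..n} - B)))"
    proof
      fix t assume t: "t \<in> {1..N0} - g ` {1..n}"
      define t' where "t' = ins s t"
      have t'r: "t' \<in> {1..Suc N0}" unfolding t'_def using ins_range t by auto
      have t's: "t' \<noteq> s" unfolding t'_def using ins_ne by auto
      have t'f: "t' \<notin> f ` {1..n}"
      proof
        assume "t' \<in> f ` {1..n}"
        then obtain k where "k \<in> {1..n}" "t' = f k" by blast
        then have "t = g k" unfolding g_def t'_def using dl_ins by metis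
        then show False using t \<open>k \<in> {1..n}\<close> by auto
      qed
      have tt: "t = dl s t'" unfolding t'_def using dl_ins by simp
      have P: "(t' \<in> B' \<longrightarrow> f (Min B) < t') \<and> (t' \<notin> B' \<longrightarrow> t' < f (Max ({1..n} - B)))"
        using Suc.prems(5) t'r t'f by blast
      have inB: "t \<in> B'' \<longleftrightarrow> t' \<in> B'" unfolding B''_def t'_def using t by auto
      have mr: "Min B \<in> {1..n}" "Max ({1..n} - B) \<in> {1..n}" using JF by auto
      show "(t \<in> B'' \<longrightarrow> g (Min B) < t) \<and> (t \<notin> B'' \<longrightarrow> t < g (Max ({1..n} - B)))"
        using P inB dl_mono[of _ _ s] fne[OF mr(1)] fne[OF mr(2)] t's unfolding g_def tt by blast
    qed
    have IH: "contracts N0 (\<Theta> N0) (jirr_of N0 B'')" using Suc.IH[OF sg gr B'' memg outg] .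
    have mr: "m \<in> {1..n}" "M \<in> {1..n}" "m \<in> B" "M \<notin> B" "m < M" using JF unfolding m_def M_def by auto
    have gmB: "g m \<in> B''" using memg mr by auto
    have "g M \<in> {1..N0}" using gr mr(2) by blast
    then have gMB: "g M \<in> {1..N0} - B''" using memg mr by auto
    have gmM: "g m < g M" using sg mr unfolding smono_def by auto
    have js2: "jset N0 B''" unfolding jset_def using B'' gmB gMB gmM by blast
    have fB'': "finite B''" using B'' finite_subset by blast
    show ?thesis
    proof (rule step[OF H js2 IH s(1)])
      show "B' \<subseteq> {1..Suc N0}" using Suc.prems(3) .
      show "\<forall>c\<in>{1..N0}. c \<in> B'' \<longleftrightarrow> ins s c \<in> B'" unfolding B''_def by auto
      show "s \<in> B' \<longrightarrow> Min B'' < s"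
      proof
        assume "s \<in> B'"
        then have fs: "f m < s" using Suc.prems(5) s unfolding m_def by blast
        then have "g m = f m" unfolding g_def dl_def by simp
        moreover have "Min B'' \<le> g m" using gmB fB'' by simp
        ultimately show "Min B'' < s" using fs by simp
      qed
      show "s \<notin> B' \<longrightarrow> s \<le> Max ({1..N0} - B'')"
      proof
        assume "s \<notin> B'"
        then have fs: "s < f M" using Suc.prems(5) s unfolding M_def by blast
        then have "g M = f M - 1" unfolding g_def dl_def by simp
        moreover have "g M \<le> Max ({1..N0} - B'')" using gMB by simp
        ultimately show "s \<le> Max ({1..N0} - B'')" using fs by simp
      qed
    qed
  qed
qed



definition emb :: "nat set \<Rightarrow> nat \<Rightarrow> nat" where
  "emb S k = sorted_list_of_set S ! (k - 1)"

lemma emb_basic: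
  assumes "finite S" "card S = p"
  shows "smono p (emb S) \<and> emb S ` {1..p} = S"
proof -
  define L where "L = sorted_list_of_set S"
  have L: "sorted_wrt (<) L" "set L = S" "length L = p" unfolding L_def using assms
    by (auto simp: strict_sorted_list_of_set)
  have sm: "smono p (emb S)" unfolding smono_def emb_def L_def[symmetric]
    using sorted_wrt_nth_less[OF L(1)] L(3) by (auto simp: diff_less_mono)
  have "emb S ` {1..p} = (\<lambda>j. L ! j) ` {0..<p}"
    unfolding emb_def L_def[symmetric]
  proof (rule set_eqI, rule iffI)
    fix x assume "x \<in> (\<lambda>k. L ! (k - 1)) ` {1..p}"
    then obtain k where k: "k \<in> {1..p}" "x = L ! (k - 1)" by auto
    then show "x \<in> (!) L ` {0..<p}" by (intro image_eqI[of _ _ "k - 1"]) auto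
  next
    fix x assume "x \<in> (!) L ` {0..<p}"
    then obtain j where "j < p" "x = L ! j" by auto
    then show "x \<in> (\<lambda>k. L ! (k - 1)) ` {1..p}" by (rule_tac x="Suc j" in image_eqI) auto
  qed
  also have "\<dots> = set L" using L(3) by (auto simp: in_set_conv_nth)
  finally show ?thesis using sm L(2) by simp
qed

lemma emb_card:
  assumes "finite S" "card S = p" "k \<in> {1..p}"
  shows "card {b \<in> S. b \<le> emb S k} = k"
proof -
  define L where "L = sorted_list_of_set S"
  have L: "sorted_wrt (<) L" "set L = S" "length L = p" "distinct L" unfolding L_def using assms
    by (auto simp: strict_sorted_list_of_set)
  have lt: "i < p \<Longrightarrow> j < p \<Longrightarrow> L ! i \<le> L ! j \<longleftrightarrow> i \<le> j" for i j
    using sorted_wrt_nth_less[OF L(1)] L(3) by (metis leD le_less linorder_le_less_linear)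
  have "{b \<in> S. b \<le> emb S k} = (\<lambda>j. L ! j) ` {0..<k}"
  proof (rule set_eqI, rule iffI)
    fix b assume b: "b \<in> {b \<in> S. b \<le> emb S k}"
    then obtain j where j: "j < p" "L ! j = b" using L(2,3) by (auto simp: in_set_conv_nth)
    have "L ! j \<le> L ! (k - 1)" using b j unfolding emb_def L_def by simp
    then have "j \<le> k - 1" using lt j assms(3) by auto
    then show "b \<in> (!) L ` {0..<k}" using j assms(3) by auto
  next
    fix b assume "b \<in> (!) L ` {0..<k}"
    then obtain j where j: "j < k" "b = L ! j" by auto
    then have "b \<in> S" using L(2,3) assms(3) by auto
    moreover have "b \<le> emb S k" using j lt assms(3) unfolding emb_def L_def[symmetric] by auto
    ultimately show "b \<in> {b \<in> S. b \<le> emb S k}" by simp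
  qed
  moreover have "card ((\<lambda>j. L ! j) ` {0..<k}) = k"
    by (subst card_image) (use L(3,4) assms(3) in \<open>auto simp: inj_on_def nth_eq_iff_index_eq\<close>)
  ultimately show ?thesis by simp
qed

lemma emb_rank:
  assumes "finite S" "card S = p" "c \<in> S"
  shows "emb S (card {b \<in> S. b \<le> c}) = c"
proof -
  obtain k where k: "k \<in> {1..p}" "c = emb S k" using emb_basic[OF assms(1,2)] assms(3) by blast
  then show ?thesis using emb_card[OF assms(1,2) k(1)] by simp
qed

lemma st_emb:
  assumes "finite S" "card S = p" "u \<in> perms p"
  shows "st (map (emb S) u) = u"
proof -
  have E: "smono p (emb S)" "emb S ` {1..p} = S" using emb_basic[OF assms(1,2)] by auto
  have U: "distinct u" "set u = {1..p}" "length u = p" using perms_D[OF assms(3)] by auto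
  have s: "set (map (emb S) u) = S" using E(2) U(2) by simp
  show ?thesis unfolding st_def s
  proof (rule nth_equalityI)
    show "length (map (\<lambda>a. card {b \<in> S. b \<le> a}) (map (emb S) u)) = length u" by simp
    fix i assume "i < length (map (\<lambda>a. card {b \<in> S. b \<le> a}) (map (emb S) u))"
    then have i: "i < length u" by simp
    then have "u ! i \<in> {1..p}" using U(2) nth_mem by blast
    then show "map (\<lambda>a. card {b \<in> S. b \<le> a}) (map (emb S) u) ! i = u ! i"
      using emb_card[OF assms(1,2)] i by simp
  qed
qed

lemma list_emb_st:
  assumes "distinct xs" "set xs = S" "length xs = p"
  shows "xs = map (emb S) (st xs)"
proof -
  have f: "finite S" "card S = p" using assms distinct_card by auto
  show ?thesis unfolding st_def assms(2)
    by (rule nth_equalityI) (use assms emb_rank[OF f] nth_mem in auto)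
qed

definition phil :: "nat \<Rightarrow> nat \<Rightarrow> nat set \<Rightarrow> nat list \<Rightarrow> nat list \<Rightarrow> nat list" where
  "phil p q Q u v = map (emb Q) u @ map (emb ({1..p+q} - Q)) v"

lemma phil_props:
  assumes Q: "Q \<subseteq> {1..p+q}" "card Q = p" and u: "u \<in> perms p" and v: "v \<in> perms q"
  shows "phil p q Q u v \<in> perms (p + q) \<and> set (take p (phil p q Q u v)) = Q \<and>
     st (take p (phil p q Q u v)) = u \<and> st (drop p (phil p q Q u v)) = v"
proof -
  define R where "R = {1..p+q} - Q"
  have fQ: "finite Q" using Q(1) finite_subset by blast
  have fR: "finite R" "card R = q" unfolding R_def using Q fQ by (auto simp: card_Diff_subset)
  have EQ: "smono p (emb Q)" "emb Q ` {1..p} = Q" using emb_basic[OF fQ Q(2)] by auto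
  have ER: "smono q (emb R)" "emb R ` {1..q} = R" using emb_basic[OF fR] by auto
  have U: "distinct u" "set u = {1..p}" "length u = p" using perms_D[OF u] by auto
  have V: "distinct v" "set v = {1..q}" "length v = q" using perms_D[OF v] by auto
  have x: "phil p q Q u v = map (emb Q) u @ map (emb R) v" unfolding phil_def R_def ..
  have d1: "distinct (map (emb Q) u)" using U smono_inj[OF EQ(1)] by (simp add: distinct_map)
  have d2: "distinct (map (emb R) v)" using V smono_inj[OF ER(1)] by (simp add: distinct_map)
  have s1: "set (map (emb Q) u) = Q" using U EQ by simp
  have s2: "set (map (emb R) v) = R" using V ER by simp
  have "phil p q Q u v \<in> perms (p + q)" unfolding perms_def x using d1 d2 s1 s2 Q(1) unfolding R_def by auto
  moreover have "take p (phil p q Q u v) = map (emb Q) u" "drop p (phil p q Q u v) = map (emb R) v"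
    unfolding x using U(3) by auto
  ultimately show ?thesis using s1 st_emb[OF fQ Q(2) u] st_emb[OF fR v] by simp
qed

lemma phi_eq:
  assumes Q: "Q \<subseteq> {1..p+q}" "card Q = p" and u: "u \<in> perms p" and v: "v \<in> perms q"
  shows "phi p q Q u v = phil p q Q u v"
  unfolding phi_def
proof (rule the_equality)
  show "phil p q Q u v \<in> perms (p + q) \<and> set (take p (phil p q Q u v)) = Q \<and>
     st (take p (phil p q Q u v)) = u \<and> st (drop p (phil p q Q u v)) = v" using phil_props[OF assms] .
  fix x assume x: "x \<in> perms (p + q) \<and> set (take p x) = Q \<and> st (take p x) = u \<and> st (drop p x) = v"
  define R where "R = {1..p+q} - Q"
  have X: "distinct x" "set x = {1..p+q}" "length x = p + q" using perms_D x by auto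
  have t: "distinct (take p x)" "set (take p x) = Q" "length (take p x) = p" using X x by auto
  have dd: "distinct (drop p x)" "length (drop p x) = q" using X by auto
  have "set (drop p x) = R"
  proof -
    have "set x = set (take p x) \<union> set (drop p x)" by (metis append_take_drop_id set_append)
    moreover have "set (take p x) \<inter> set (drop p x) = {}" using X(1) by (metis append_take_drop_id distinct_append)
    ultimately show ?thesis unfolding R_def using X(2) t(2) by auto
  qed
  then have "drop p x = map (emb R) v" using list_emb_st[OF dd(1) _ dd(2)] x by simp
  moreover have "take p x = map (emb Q) u" using list_emb_st[OF t] x by simp
  ultimately show "x = phil p q Q u v" unfolding phil_def R_def by (metis append_take_drop_id)
qed



lemma swp_append1: "Suc d < length xs \<Longrightarrow> swp (xs @ ys) d = swp xs d @ ys"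
  unfolding swp_def by (simp add: list_update_append nth_append)

lemma swp_append2: "Suc d < length ys \<Longrightarrow> swp (xs @ ys) (length xs + d) = xs @ swp ys d"
  unfolding swp_def by (simp add: list_update_append nth_append)

lemma swp_map: "Suc d < length xs \<Longrightarrow> swp (map f xs) d = map f (swp xs d)"
  unfolding swp_def by (simp add: map_update)

lemma smono_less: "smono n f \<Longrightarrow> i \<in> {1..n} \<Longrightarrow> j \<in> {1..n} \<Longrightarrow> f i < f j \<longleftrightarrow> i < j"
  unfolding smono_def by (metis linorder_neqE_nat not_less_iff_gr_or_eq)

lemma smono_eq: "smono n f \<Longrightarrow> i \<in> {1..n} \<Longrightarrow> j \<in> {1..n} \<Longrightarrow> f i = f j \<longleftrightarrow> i = j"
  unfolding smono_def by (metis linorder_neqE_nat not_less_iff_gr_or_eq)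

lemma drop_sub: "x \<in> perms n \<Longrightarrow> set (drop k x) \<subseteq> {1..n}"
  using perms_D by (metis set_drop_subset)

lemma phiU:
  assumes Q: "Q \<subseteq> {1..p+q}" "card Q = p" and z: "z \<in> perms p" and v: "v \<in> perms q"
    and d: "d \<in> descents z"
  defines "y \<equiv> phil p q Q z v"
  shows "d \<in> descents y \<and> swp y d = phil p q Q (swp z d) v \<and>
    lab (p+q) y d = emb Q ` lab p z d \<union> {t \<in> {1..p+q} - Q. emb Q (z ! Suc d) < t}"
proof -
  define N where "N = p + q"
  define R where "R = {1..p+q} - Q"
  define E where "E = emb Q"
  define F where "F = emb R"
  have fQ: "finite Q" using Q(1) finite_subset by blast
  have fR: "finite R" "card R = q" unfolding R_def using Q fQ by (auto simp: card_Diff_subset)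
  have EQ: "smono p E" "E ` {1..p} = Q" using emb_basic[OF fQ Q(2)] unfolding E_def by auto
  have ER: "smono q F" "F ` {1..q} = R" using emb_basic[OF fR] unfolding F_def by auto
  have Z: "distinct z" "set z = {1..p}" "length z = p" using perms_D[OF z] by auto
  have V: "distinct v" "set v = {1..q}" "length v = q" using perms_D[OF v] by auto
  have dd: "Suc d < p" "z ! d > z ! Suc d" using desc_D[OF d] Z(3) by auto
  define a where "a = z ! Suc d"
  define b where "b = z ! d"
  have ab: "a \<in> {1..p}" "b \<in> {1..p}" "a < b" unfolding a_def b_def using Z dd nth_mem
    by (metis Suc_lessD)+
  have yd: "y = map E z @ map F v" unfolding y_def phil_def E_def F_def R_def ..
  have y1: "y ! d = E b" "y ! Suc d = E a" unfolding yd a_def b_def using dd Z(3) by (auto simp: nth_append)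
  have desc: "d \<in> descents y"
    unfolding descents_def using y1 dd smono_less[OF EQ(1) ab(1) ab(2)] ab Z(3) unfolding yd by simp
  have sw: "swp y d = phil p q Q (swp z d) v"
    unfolding yd phil_def E_def F_def R_def using dd Z(3) by (simp add: swp_append1 swp_map)
  have dr: "set (drop (Suc (Suc d)) y) = E ` set (drop (Suc (Suc d)) z) \<union> R"
    unfolding yd using dd Z(3) ER(2) V(2) by (simp add: drop_map)
  have dz: "set (drop (Suc (Suc d)) z) \<subseteq> {1..p}" using drop_sub[OF z] .
  have QR: "Q \<inter> R = {}" "Q \<union> R = {1..N}" unfolding R_def N_def using Q(1) by auto
  have labz: "lab p z d = {a} \<union> {c \<in> set (drop (Suc (Suc d)) z). a < c \<and> c < b} \<union> {c. b < c \<and> c \<le> p}"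
    unfolding lab_def a_def b_def ..
  have laby: "lab N y d = {E a} \<union> {c \<in> E ` set (drop (Suc (Suc d)) z) \<union> R. E a < c \<and> c < E b} \<union> {c. E b < c \<and> c \<le> N}"
    unfolding lab_def y1 dr ..
  have labz_sub: "lab p z d \<subseteq> {1..p}" unfolding labz using ab dz by auto
  have EbN: "E b \<in> {1..N}" "E a \<in> {1..N}" using EQ(2) ab QR by auto
  have "lab N y d = E ` lab p z d \<union> {t \<in> R. E a < t}"
  proof (rule set_eqI)
    fix x
    consider "x \<in> Q" | "x \<in> R" | "x \<notin> {1..N}" using QR by blast
    then show "x \<in> lab N y d \<longleftrightarrow> x \<in> E ` lab p z d \<union> {t \<in> R. E a < t}"
    proof cases
      case 1
      then obtain k where k: "k \<in> {1..p}" "x = E k" using EQ(2) by blast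
      have xR: "x \<notin> R" using 1 QR by auto
      have i1: "x \<in> E ` set (drop (Suc (Suc d)) z) \<longleftrightarrow> k \<in> set (drop (Suc (Suc d)) z)"
        using k dz smono_eq[OF EQ(1)] by blast
      have i2: "x \<in> E ` lab p z d \<longleftrightarrow> k \<in> lab p z d"
        using k labz_sub smono_eq[OF EQ(1)] by blast
      have c1: "x = E a \<longleftrightarrow> k = a" using k ab smono_eq[OF EQ(1)] by auto
      have c2: "E a < x \<longleftrightarrow> a < k" "x < E b \<longleftrightarrow> k < b" "E b < x \<longleftrightarrow> b < k"
        using k ab smono_less[OF EQ(1)] by auto
      have xN: "x \<le> N" using 1 QR by auto
      have L: "x \<in> lab N y d \<longleftrightarrow> x = E a \<or> ((x \<in> E ` set (drop (Suc (Suc d)) z) \<or> x \<in> R) \<and> E a < x \<and> x < E b) \<or> (E b < x \<and> x \<le> N)"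
        unfolding laby by blast
      have Rr: "x \<in> E ` lab p z d \<union> {t \<in> R. E a < t} \<longleftrightarrow> k \<in> lab p z d" using i2 xR by blast
      have K: "k \<in> lab p z d \<longleftrightarrow> k = a \<or> (k \<in> set (drop (Suc (Suc d)) z) \<and> a < k \<and> k < b) \<or> (b < k \<and> k \<le> p)"
        unfolding labz by blast
      have kq: "k \<le> p" using k by auto
      show ?thesis unfolding L Rr K i1 c1 c2 using xN kq xR by blast
    next
      case 2
      have xQ: "x \<notin> E ` lab p z d" using 2 QR EQ(2) labz_sub by blast
      have "E a \<in> Q" "E b \<in> Q" using EQ(2) ab(1,2) by blast+
      then have "x \<noteq> E a" "x \<noteq> E b" using 2 QR by auto
      moreover have "x \<le> N" using 2 QR by auto
      moreover have "E a < E b" using smono_less[OF EQ(1) ab(1,2)] ab(3) by simp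
      ultimately show ?thesis unfolding laby using xQ 2 by auto
    next
      case 3
      have "x \<notin> E ` lab p z d" using 3 QR EQ(2) labz_sub by blast
      moreover have "x \<notin> R" using 3 QR by auto
      moreover have "x \<notin> E ` set (drop (Suc (Suc d)) z)" using 3 QR EQ(2) dz by blast
      moreover have "x \<noteq> E a" using 3 EbN by auto
      moreover have "\<not> (E b < x \<and> x \<le> N)" using 3 EbN by auto
      ultimately show ?thesis unfolding laby by auto
    qed
  qed
  then show ?thesis using desc sw unfolding N_def R_def E_def a_def by simp
qed

lemma phiV:
  assumes Q: "Q \<subseteq> {1..p+q}" "card Q = p" and u: "u \<in> perms p" and v: "v \<in> perms q"
    and d: "d \<in> descents v"
  defines "y \<equiv> phil p q Q u v"
  shows "p + d \<in> descents y \<and> swp y (p + d) = phil p q Q u (swp v d) \<and>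
    lab (p+q) y (p + d) = emb ({1..p+q} - Q) ` lab q v d \<union> {t \<in> Q. emb ({1..p+q} - Q) (v ! d) < t}"
proof -
  define N where "N = p + q"
  define R where "R = {1..p+q} - Q"
  define E where "E = emb Q"
  define F where "F = emb R"
  have fQ: "finite Q" using Q(1) finite_subset by blast
  have fR: "finite R" "card R = q" unfolding R_def using Q fQ by (auto simp: card_Diff_subset)
  have EQ: "smono p E" "E ` {1..p} = Q" using emb_basic[OF fQ Q(2)] unfolding E_def by auto
  have ER: "smono q F" "F ` {1..q} = R" using emb_basic[OF fR] unfolding F_def by auto
  have U: "distinct u" "set u = {1..p}" "length u = p" using perms_D[OF u] by auto
  have V: "distinct v" "set v = {1..q}" "length v = q" using perms_D[OF v] by auto
  have dd: "Suc d < q" "v ! d > v ! Suc d" using desc_D[OF d] V(3) by auto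
  define a where "a = v ! Suc d"
  define b where "b = v ! d"
  have ab: "a \<in> {1..q}" "b \<in> {1..q}" "a < b" unfolding a_def b_def using V dd nth_mem
    by (metis Suc_lessD)+
  have yd: "y = map E u @ map F v" unfolding y_def phil_def E_def F_def R_def ..
  have y1: "y ! (p + d) = F b" "y ! Suc (p + d) = F a" unfolding yd a_def b_def using dd U(3) V(3)
    by (auto simp: nth_append)
  have desc: "p + d \<in> descents y"
    unfolding descents_def using y1 dd smono_less[OF ER(1) ab(1) ab(2)] ab U(3) V(3) unfolding yd by simp
  have sw: "swp y (p + d) = phil p q Q u (swp v d)"
    unfolding yd phil_def E_def F_def R_def using dd U(3) V(3) swp_append2[of d "map (emb ({1..p+q} - Q)) v" "map (emb Q) u"]
    by (simp add: swp_map)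
  have dr: "set (drop (Suc (Suc (p + d))) y) = F ` set (drop (Suc (Suc d)) v)"
  proof -
    have "drop (Suc (Suc (p + d))) y = drop (Suc (Suc d)) (map F v)" unfolding yd using U(3) by simp
    then show ?thesis by (simp add: drop_map)
  qed
  have dv: "set (drop (Suc (Suc d)) v) \<subseteq> {1..q}" using drop_sub[OF v] .
  have QR: "Q \<inter> R = {}" "Q \<union> R = {1..N}" unfolding R_def N_def using Q(1) by auto
  have labv: "lab q v d = {a} \<union> {c \<in> set (drop (Suc (Suc d)) v). a < c \<and> c < b} \<union> {c. b < c \<and> c \<le> q}"
    unfolding lab_def a_def b_def ..
  have laby: "lab N y (p + d) = {F a} \<union> {c \<in> F ` set (drop (Suc (Suc d)) v). F a < c \<and> c < F b} \<union> {c. F b < c \<and> c \<le> N}"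
    unfolding lab_def y1 dr by simp
  have labv_sub: "lab q v d \<subseteq> {1..q}" unfolding labv using ab dv by auto
  have EbN: "F b \<in> {1..N}" "F a \<in> {1..N}" using ER(2) ab QR by auto
  have "lab N y (p + d) = F ` lab q v d \<union> {t \<in> Q. F b < t}"
  proof (rule set_eqI)
    fix x
    consider "x \<in> R" | "x \<in> Q" | "x \<notin> {1..N}" using QR by blast
    then show "x \<in> lab N y (p + d) \<longleftrightarrow> x \<in> F ` lab q v d \<union> {t \<in> Q. F b < t}"
    proof cases
      case 1
      then obtain k where k: "k \<in> {1..q}" "x = F k" using ER(2) by blast
      have xQ: "x \<notin> Q" using 1 QR by auto
      have i1: "x \<in> F ` set (drop (Suc (Suc d)) v) \<longleftrightarrow> k \<in> set (drop (Suc (Suc d)) v)"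
        using k dv smono_eq[OF ER(1)] by blast
      have i2: "x \<in> F ` lab q v d \<longleftrightarrow> k \<in> lab q v d"
        using k labv_sub smono_eq[OF ER(1)] by blast
      have c1: "x = F a \<longleftrightarrow> k = a" using k ab smono_eq[OF ER(1)] by auto
      have c2: "F a < x \<longleftrightarrow> a < k" "x < F b \<longleftrightarrow> k < b" "F b < x \<longleftrightarrow> b < k"
        using k ab smono_less[OF ER(1)] by auto
      have xN: "x \<le> N" using 1 QR by auto
      have L: "x \<in> lab N y (p + d) \<longleftrightarrow> x = F a \<or> (x \<in> F ` set (drop (Suc (Suc d)) v) \<and> F a < x \<and> x < F b) \<or> (F b < x \<and> x \<le> N)"
        unfolding laby by blast
      have Rr: "x \<in> F ` lab q v d \<union> {t \<in> Q. F b < t} \<longleftrightarrow> k \<in> lab q v d" using i2 xQ by blast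
      have K: "k \<in> lab q v d \<longleftrightarrow> k = a \<or> (k \<in> set (drop (Suc (Suc d)) v) \<and> a < k \<and> k < b) \<or> (b < k \<and> k \<le> q)"
        unfolding labv by blast
      have kq: "k \<le> q" using k by auto
      show ?thesis unfolding L Rr K i1 c1 c2 using xN kq by blast
    next
      case 2
      have xR: "x \<notin> F ` lab q v d" using 2 QR ER(2) labv_sub by blast
      have "F a \<in> R" "F b \<in> R" using ER(2) ab(1,2) by blast+
      then have "x \<noteq> F a" "x \<noteq> F b" using 2 QR by auto
      moreover have "x \<notin> F ` set (drop (Suc (Suc d)) v)" using 2 QR ER(2) dv by blast
      moreover have "x \<le> N" using 2 QR by auto
      ultimately show ?thesis unfolding laby using xR 2 by auto
    next
      case 3
      have "x \<notin> F ` lab q v d" using 3 QR ER(2) labv_sub by blast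
      moreover have "x \<notin> Q" using 3 QR by auto
      moreover have "x \<notin> F ` set (drop (Suc (Suc d)) v)" using 3 QR ER(2) dv by blast
      moreover have "x \<noteq> F a" using 3 EbN by auto
      moreover have "\<not> (F b < x \<and> x \<le> N)" using 3 EbN by auto
      ultimately show ?thesis unfolding laby by auto
    qed
  qed
  then show ?thesis using desc sw unfolding N_def R_def F_def b_def by simp
qed



lemma edgeU:
  assumes C: "\<forall>n. lattice_congruence n (\<Theta> n)" and H: "Hyp \<Theta>"
    and Q: "Q \<subseteq> {1..p+q}" "card Q = p" and z: "z \<in> perms p" and v: "v \<in> perms q"
    and d: "d \<in> descents z" and e: "(swp z d, z) \<in> \<Theta> p"
  shows "(phil p q Q (swp z d) v, phil p q Q z v) \<in> \<Theta> (p + q)"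
proof -
  define y where "y = phil p q Q z v"
  define E where "E = emb Q"
  define N where "N = p + q"
  have PU: "d \<in> descents y" "swp y d = phil p q Q (swp z d) v"
    "lab N y d = E ` lab p z d \<union> {t \<in> {1..N} - Q. E (z ! Suc d) < t}"
    using phiU[OF Q z v d] unfolding y_def E_def N_def by auto
  have fQ: "finite Q" using Q(1) finite_subset by blast
  have EQ: "smono p E" "E ` {1..p} = Q" using emb_basic[OF fQ Q(2)] unfolding E_def by auto
  have yp: "y \<in> perms N" unfolding y_def N_def using phil_props[OF Q z v] by auto
  define B where "B = lab p z d"
  define B' where "B' = lab N y d"
  have LB: "jset p B" "Min B = z ! Suc d" "Max ({1..p} - B) = z ! d" using lab_props[OF z d] unfolding B_def by auto
  have LB': "jset N B'" using lab_props[OF yp PU(1)] unfolding B'_def by auto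
  have c: "contracts p (\<Theta> p) (jirr_of p B)" using edge_to_label[OF C[rule_format] z d e] unfolding B_def .
  have JF: "Min B \<in> {1..p}" "Max ({1..p} - B) \<in> {1..p}" "Min B < Max ({1..p} - B)" "B \<subseteq> {1..p}"
    using jset_facts[OF LB(1)] by auto
  have "contracts N (\<Theta> N) (jirr_of N B')"
  proof (rule multi[OF H LB(1) c EQ(1)])
    show "E ` {1..p} \<subseteq> {1..N}" using EQ(2) Q(1) unfolding N_def by simp
    show "B' \<subseteq> {1..N}" using LB' unfolding jset_def by auto
    show "\<forall>k\<in>{1..p}. k \<in> B \<longleftrightarrow> E k \<in> B'"
    proof
      fix k assume k: "k \<in> {1..p}"
      have "E k \<in> Q" using k EQ(2) by blast
      then have "E k \<in> B' \<longleftrightarrow> E k \<in> E ` B" unfolding B'_def PU(3) B_def by blast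
      also have "\<dots> \<longleftrightarrow> k \<in> B" using k JF(4) smono_eq[OF EQ(1)] by blast
      finally show "k \<in> B \<longleftrightarrow> E k \<in> B'" by simp
    qed
    show "\<forall>t\<in>{1..N} - E ` {1..p}. (t \<in> B' \<longrightarrow> E (Min B) < t) \<and> (t \<notin> B' \<longrightarrow> t < E (Max ({1..p} - B)))"
    proof
      fix t assume t: "t \<in> {1..N} - E ` {1..p}"
      then have tQ: "t \<notin> Q" "t \<in> {1..N}" using EQ(2) by auto
      have nE: "t \<notin> E ` B" using tQ EQ(2) JF(4) by blast
      have iff: "t \<in> B' \<longleftrightarrow> E (Min B) < t" unfolding B'_def PU(3) B_def[symmetric] LB(2)[symmetric]
        using nE tQ by blast
      have "E (Min B) \<noteq> t" using tQ EQ(2) JF(1) by blast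
      moreover have "E (Min B) < E (Max ({1..p} - B))" using smono_less[OF EQ(1) JF(1,2)] JF(3) by simp
      ultimately show "(t \<in> B' \<longrightarrow> E (Min B) < t) \<and> (t \<notin> B' \<longrightarrow> t < E (Max ({1..p} - B)))"
        using iff by auto
    qed
  qed
  then have "(swp y d, y) \<in> \<Theta> N" using label_to_edge[OF C[rule_format] yp PU(1)] unfolding B'_def by blast
  then show ?thesis using PU(2) unfolding y_def N_def by simp
qed

lemma edgeV:
  assumes C: "\<forall>n. lattice_congruence n (\<Theta> n)" and H: "Hyp \<Theta>"
    and Q: "Q \<subseteq> {1..p+q}" "card Q = p" and u: "u \<in> perms p" and v: "v \<in> perms q"
    and d: "d \<in> descents v" and e: "(swp v d, v) \<in> \<Theta> q"
  shows "(phil p q Q u (swp v d), phil p q Q u v) \<in> \<Theta> (p + q)"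
proof -
  define y where "y = phil p q Q u v"
  define R where "R = {1..p+q} - Q"
  define F where "F = emb R"
  define N where "N = p + q"
  have PV: "p + d \<in> descents y" "swp y (p + d) = phil p q Q u (swp v d)"
    "lab N y (p + d) = F ` lab q v d \<union> {t \<in> Q. F (v ! d) < t}"
    using phiV[OF Q u v d] unfolding y_def F_def N_def R_def by auto
  have fQ: "finite Q" using Q(1) finite_subset by blast
  have fR: "finite R" "card R = q" unfolding R_def using Q fQ by (auto simp: card_Diff_subset)
  have ER: "smono q F" "F ` {1..q} = R" using emb_basic[OF fR] unfolding F_def by auto
  have yp: "y \<in> perms N" unfolding y_def N_def using phil_props[OF Q u v] by auto
  define B where "B = lab q v d"
  define B' where "B' = lab N y (p + d)"
  have LB: "jset q B" "Min B = v ! Suc d" "Max ({1..q} - B) = v ! d" using lab_props[OF v d] unfolding B_def by auto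
  have LB': "jset N B'" using lab_props[OF yp PV(1)] unfolding B'_def by auto
  have c: "contracts q (\<Theta> q) (jirr_of q B)" using edge_to_label[OF C[rule_format] v d e] unfolding B_def .
  have JF: "Min B \<in> {1..q}" "Max ({1..q} - B) \<in> {1..q}" "Min B < Max ({1..q} - B)" "B \<subseteq> {1..q}"
    using jset_facts[OF LB(1)] by auto
  have "contracts N (\<Theta> N) (jirr_of N B')"
  proof (rule multi[OF H LB(1) c ER(1)])
    show "F ` {1..q} \<subseteq> {1..N}" using ER(2) unfolding N_def R_def by auto
    show "B' \<subseteq> {1..N}" using LB' unfolding jset_def by auto
    show "\<forall>k\<in>{1..q}. k \<in> B \<longleftrightarrow> F k \<in> B'"
    proof
      fix k assume k: "k \<in> {1..q}"
      have "F k \<in> R" using k ER(2) by blast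
      then have "F k \<notin> Q" unfolding R_def by auto
      then have "F k \<in> B' \<longleftrightarrow> F k \<in> F ` B" unfolding B'_def PV(3) B_def by blast
      also have "\<dots> \<longleftrightarrow> k \<in> B" using k JF(4) smono_eq[OF ER(1)] by blast
      finally show "k \<in> B \<longleftrightarrow> F k \<in> B'" by simp
    qed
    show "\<forall>t\<in>{1..N} - F ` {1..q}. (t \<in> B' \<longrightarrow> F (Min B) < t) \<and> (t \<notin> B' \<longrightarrow> t < F (Max ({1..q} - B)))"
    proof
      fix t assume t: "t \<in> {1..N} - F ` {1..q}"
      then have tQ: "t \<in> Q" using ER(2) unfolding R_def N_def by auto
      have nF: "t \<notin> F ` B" using tQ ER(2) JF(4) unfolding R_def by blast
      have iff: "t \<in> B' \<longleftrightarrow> F (Max ({1..q} - B)) < t" unfolding B'_def PV(3) B_def[symmetric] LB(3)[symmetric]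
        using nF tQ by blast
      have "F (Max ({1..q} - B)) \<noteq> t" using tQ ER(2) JF(2) unfolding R_def by blast
      moreover have "F (Min B) < F (Max ({1..q} - B))" using smono_less[OF ER(1) JF(1,2)] JF(3) by simp
      ultimately show "(t \<in> B' \<longrightarrow> F (Min B) < t) \<and> (t \<notin> B' \<longrightarrow> t < F (Max ({1..q} - B)))"
        using iff by auto
    qed
  qed
  then have "(swp y (p + d), y) \<in> \<Theta> N" using label_to_edge[OF C[rule_format] yp PV(1)] unfolding B'_def by blast
  then show ?thesis using PV(2) unfolding y_def N_def by simp
qed

lemma chain_gen:
  assumes C1: "lattice_congruence n \<Theta>1" and C2: "lattice_congruence N \<Theta>2"
    and hp: "\<forall>z\<in>perms n. h z \<in> perms N"
    and he: "\<forall>z\<in>perms n. \<forall>d\<in>descents z. (swp z d, z) \<in> \<Theta>1 \<longrightarrow> (h (swp z d), h z) \<in> \<Theta>2"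
    and uu: "(u, u') \<in> \<Theta>1"
  shows "(h u, h u') \<in> \<Theta>2"
proof -
  have up: "u \<in> perms n" "u' \<in> perms n" using cong_in[OF C1 uu] by auto
  define w where "w = weak_join n u u'"
  have W: "w \<in> perms n" "weak_le u w" "weak_le u' w" using join_props[OF up] unfolding w_def by auto
  have key: "\<And>a. (a, w) \<in> \<Theta>1 \<Longrightarrow> a \<in> perms n \<Longrightarrow> weak_le a w \<Longrightarrow> (h a, h w) \<in> \<Theta>2"
  proof -
    fix a assume aw: "(a, w) \<in> \<Theta>1" and ap: "a \<in> perms n" and al: "weak_le a w"
    have P: "\<forall>z\<in>perms n. weak_le a z \<and> weak_le z w \<and> card (inversions z) = k \<longrightarrow> (h a, h z) \<in> \<Theta>2" for k
    proof (induction k rule: less_induct)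
      case (less k)
      show ?case
      proof (intro ballI impI)
        fix z assume zp: "z \<in> perms n" and zz: "weak_le a z \<and> weak_le z w \<and> card (inversions z) = k"
        show "(h a, h z) \<in> \<Theta>2"
        proof (cases "z = a")
          case True
          then show ?thesis using cong_refl[OF C2] hp ap by auto
        next
          case False
          obtain d where d: "d \<in> descents z" "(z ! Suc d, z ! d) \<notin> inversions a"
            using descent_exists[OF ap zp _ ] zz False by metis
          have dz: "distinct z" using perms_D[OF zp] by auto
          have dd: "Suc d < length z" "z ! d > z ! Suc d" using desc_D[OF d(1)] by auto
          have Iz: "inversions (swp z d) = inversions z - {(z ! Suc d, z ! d)}" using inversions_swp[OF dz dd] .
          have pin: "(z ! Suc d, z ! d) \<in> inversions z" using pair_in_inv[OF dz dd] .
          have z'p: "swp z d \<in> perms n" using swp_perms[OF zp dd(1)] .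
          have az': "weak_le a (swp z d)" using zz d(2) unfolding weak_le_def Iz by auto
          have z'z: "weak_le (swp z d) z" unfolding weak_le_def Iz by auto
          have fin: "finite (inversions z)" using inv_sub[OF zp] unfolding prs_def
            by (rule finite_subset) (auto intro: finite_subset[of _ "{1..n} \<times> {1..n}"])
          have "card (inversions z) > 0" using pin fin card_gt_0_iff by blast
          then have lt: "card (inversions (swp z d)) < k" using zz Iz pin fin by simp
          have IH: "(h a, h (swp z d)) \<in> \<Theta>2"
            using less.IH[OF lt] z'p az' z'z zz weak_le_trans by blast
          have "(swp z d, w) \<in> \<Theta>1" using cong_convex[OF C1 aw z'p az'] zz z'z weak_le_trans by blast
          moreover have "(z, w) \<in> \<Theta>1" using cong_convex[OF C1 aw zp] zz by blast
          ultimately have "(swp z d, z) \<in> \<Theta>1" using cong_sym[OF C1] cong_trans[OF C1] by blast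
          then have "(h (swp z d), h z) \<in> \<Theta>2" using he zp d(1) by blast
          then show ?thesis using IH cong_trans[OF C2] by blast
        qed
      qed
    qed
    show "(h a, h w) \<in> \<Theta>2" using P W(1) al weak_le_refl by blast
  qed
  have "(weak_join n u u, weak_join n u u') \<in> \<Theta>1" using cong_join[OF C1 cong_refl[OF C1 up(1)] uu] .
  then have uw: "(u, w) \<in> \<Theta>1" using join_le[OF up(1) up(1) weak_le_refl] unfolding w_def by simp
  have "(weak_join n u u', weak_join n u' u') \<in> \<Theta>1" using cong_join[OF C1 uu cong_refl[OF C1 up(2)]] .
  then have u'w: "(u', w) \<in> \<Theta>1" using join_le[OF up(2) up(2) weak_le_refl] cong_sym[OF C1] unfolding w_def by simp
  have "(h u, h w) \<in> \<Theta>2" using key[OF uw up(1) W(2)] .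
  moreover have "(h u', h w) \<in> \<Theta>2" using key[OF u'w up(2) W(3)] .
  ultimately show ?thesis using cong_sym[OF C2] cong_trans[OF C2] by blast
qed

lemma hyp_imp_insertional:
  assumes C: "\<forall>n. lattice_congruence n (\<Theta> n)" and H: "Hyp \<Theta>"
  shows "insertional \<Theta>"
  unfolding insertional_def
proof (intro allI impI)
  fix p q Q u u' v v'
  assume a: "Q \<subseteq> {1..p + q} \<and> card Q = p \<and> (u, u') \<in> \<Theta> p \<and> (v, v') \<in> \<Theta> q"
  then have Q: "Q \<subseteq> {1..p + q}" "card Q = p" and uu: "(u, u') \<in> \<Theta> p" and vv: "(v, v') \<in> \<Theta> q" by auto
  have up: "u \<in> perms p" "u' \<in> perms p" using cong_in[OF C[rule_format] uu] by auto
  have vp: "v \<in> perms q" "v' \<in> perms q" using cong_in[OF C[rule_format] vv] by auto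
  have 1: "(phil p q Q u v, phil p q Q u' v) \<in> \<Theta> (p + q)"
  proof (rule chain_gen[OF C[rule_format] C[rule_format], where h="\<lambda>z. phil p q Q z v"])
    show "\<forall>z\<in>perms p. phil p q Q z v \<in> perms (p + q)" using phil_props[OF Q _ vp(1)] by blast
    show "\<forall>z\<in>perms p. \<forall>d\<in>descents z. (swp z d, z) \<in> \<Theta> p \<longrightarrow> (phil p q Q (swp z d) v, phil p q Q z v) \<in> \<Theta> (p + q)"
      using edgeU[OF C H Q _ vp(1)] by blast
    show "(u, u') \<in> \<Theta> p" by fact
  qed
  have 2: "(phil p q Q u' v, phil p q Q u' v') \<in> \<Theta> (p + q)"
  proof (rule chain_gen[OF C[rule_format] C[rule_format], where h="\<lambda>z. phil p q Q u' z"])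
    show "\<forall>z\<in>perms q. phil p q Q u' z \<in> perms (p + q)" using phil_props[OF Q up(2)] by blast
    show "\<forall>z\<in>perms q. \<forall>d\<in>descents z. (swp z d, z) \<in> \<Theta> q \<longrightarrow> (phil p q Q u' (swp z d), phil p q Q u' z) \<in> \<Theta> (p + q)"
      using edgeV[OF C H Q up(2)] by blast
    show "(v, v') \<in> \<Theta> q" by fact
  qed
  have "(phil p q Q u v, phil p q Q u' v') \<in> \<Theta> (p + q)" using 1 2 cong_trans[OF C[rule_format]] by blast
  then show "(phi p q Q u v, phi p q Q u' v') \<in> \<Theta> (p + q)"
    using phi_eq[OF Q up(1) vp(1)] phi_eq[OF Q up(2) vp(2)] by simp
qed



lemma emb_ins:
  assumes i: "i \<in> {1..Suc n}" and k: "k \<in> {1..n}"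
  shows "emb ({1..Suc n} - {i}) k = ins i k"
proof -
  define S where "S = {1..Suc n} - {i}"
  have fS: "finite S" "card S = n" unfolding S_def using i by auto
  have cS: "ins i k \<in> S" unfolding S_def ins_def using i k by auto
  have "card {b \<in> S. b \<le> ins i k} = k"
  proof (cases "k < i")
    case True
    then have "{b \<in> S. b \<le> ins i k} = {1..k}" unfolding S_def ins_def using k i by auto
    then show ?thesis by simp
  next
    case False
    then have "{b \<in> S. b \<le> ins i k} = {1..Suc k} - {i}" unfolding S_def ins_def using k i by auto
    moreover have "i \<in> {1..Suc k}" using False i by auto
    ultimately show ?thesis by simp
  qed
  then show ?thesis using emb_rank[OF fS cS] unfolding S_def by simp
qed

lemma Rset_ins: "A \<subseteq> {1..n} \<Longrightarrow> Rset n A i = ins i ` A \<union> {i}"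
  unfolding Rset_def ins_def by (auto; force)

lemma Lset_ins: "A \<subseteq> {1..n} \<Longrightarrow> Lset n A i = ins i ` A"
  unfolding Lset_def ins_def by (auto; force)

lemma lab_jirr:
  assumes js: "jset n A"
  shows "lab n (jirr_of n A) (card ({1..n} - A) - 1) = A"
proof -
  define k where "k = card ({1..n} - A)"
  have D: "descents (jirr_of n A) = {k - 1}" "jirr_of n A ! (k - 1) = Max ({1..n} - A)"
    "jirr_of n A ! k = Min A" "0 < k" "k < n" using jirr_desc[OF js] unfolding k_def by auto
  have JF: "finite A" "A \<noteq> {}" "Min A \<in> A" "Max ({1..n} - A) \<in> {1..n} - A" "Min A < Max ({1..n} - A)"
    "\<forall>b\<in>A. Min A \<le> b" "\<forall>c\<in>{1..n} - A. c \<le> Max ({1..n} - A)" "A \<subseteq> {1..n}"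
    using jset_facts[OF js] by auto
  have sk: "Suc (k - 1) = k" using D(4) by simp
  have "drop (Suc k) (jirr_of n A) = drop 1 (sorted_list_of_set A)"
    unfolding jirr_of_def k_def by simp
  also have "\<dots> = sorted_list_of_set (A - {Min A})" using sorted_list_of_set_nonempty[OF JF(1,2)] by simp
  finally have dr: "set (drop (Suc k) (jirr_of n A)) = A - {Min A}" using JF(1) by simp
  have L: "lab n (jirr_of n A) (k - 1) = {Min A} \<union> {c \<in> A - {Min A}. Min A < c \<and> c < Max ({1..n} - A)} \<union>
      {c. Max ({1..n} - A) < c \<and> c \<le> n}"
    unfolding lab_def sk dr D(2,3) ..
  have "\<dots> = A"
  proof (rule set_eqI, rule iffI)
    fix c assume "c \<in> {Min A} \<union> {c \<in> A - {Min A}. Min A < c \<and> c < Max ({1..n} - A)} \<union> {c. Max ({1..n} - A) < c \<and> c \<le> n}"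
    then consider "c = Min A" | "c \<in> A" | "Max ({1..n} - A) < c" "c \<le> n" by auto
    then show "c \<in> A"
    proof cases
      case 1 then show ?thesis using JF(3) by simp
    next
      case 2 then show ?thesis .
    next
      case 3
      show ?thesis
      proof (rule ccontr)
        assume "c \<notin> A"
        moreover have "1 \<le> c" using 3 JF(4) by auto
        ultimately have "c \<le> Max ({1..n} - A)" using JF(7) 3 by auto
        then show False using 3 by simp
      qed
    qed
  next
    fix c assume c: "c \<in> A"
    have "c \<noteq> Max ({1..n} - A)" using c JF(4) by auto
    moreover have "Min A \<le> c" using c JF(6) by auto
    moreover have "c \<le> n" using c JF(8) by auto
    ultimately show "c \<in> {Min A} \<union> {c \<in> A - {Min A}. Min A < c \<and> c < Max ({1..n} - A)} \<union> {c. Max ({1..n} - A) < c \<and> c \<le> n}"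
      using c by (cases "c = Min A") (auto simp: nat_neq_iff)
  qed
  then show ?thesis using L unfolding k_def by simp
qed

lemma perms_one: "[1] \<in> perms 1"
  unfolding perms_def by simp

lemma insertional_imp_hyp:
  assumes C: "\<forall>n. lattice_congruence n (\<Theta> n)" and I: "insertional \<Theta>"
  shows "Hyp \<Theta>"
  unfolding Hyp_def Let_def
proof (intro allI impI)
  fix n g assume a: "join_irreducible n g \<and> contracts n (\<Theta> n) g"
  define A where "A = assoc_subset g"
  have JJ: "jset n A" "g = jirr_of n A" using JI_is_jirr[of n g] a unfolding A_def by auto
  define k where "k = card ({1..n} - A)"
  define m where "m = Min A"
  define M where "M = Max ({1..n} - A)"
  have D: "descents g = {k - 1}" "g ! (k - 1) = M" "g ! k = m" "0 < k" "k < n"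
    using jirr_desc[OF JJ(1)] unfolding k_def JJ(2)[symmetric] m_def M_def by auto
  have sk: "Suc (k - 1) = k" using D(4) by simp
  have JF: "finite A" "A \<noteq> {}" "m \<in> A" "M \<in> {1..n} - A" "m < M" "A \<subseteq> {1..n}"
    using jset_facts[OF JJ(1)] unfolding m_def M_def by auto
  have gp: "g \<in> perms n" using a unfolding join_irreducible_def by auto
  have lc: "lower_cover n g = swp g (k - 1)" using JI_lower[OF _ D(1)] a by auto
  have gg: "(g, swp g (k - 1)) \<in> \<Theta> n" using a lc unfolding contracts_def by simp
  have sgp: "swp g (k - 1) \<in> perms n" using cong_in[OF C[rule_format] gg] by simp
  have labg: "lab n g (k - 1) = A" using lab_jirr[OF JJ(1)] JJ(2) unfolding k_def by simp
  have d0: "k - 1 \<in> descents g" using D(1) by simp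
  have one: "([1], [1]) \<in> \<Theta> 1" using cong_refl[OF C[rule_format] perms_one] .
  show "(\<forall>i\<in>{Min (assoc_subset g) + 1..Max ({1..n} - assoc_subset g) + 1}.
            contracts (Suc n) (\<Theta> (Suc n)) (R_ins n i g)) \<and>
        (\<forall>i\<in>{Min (assoc_subset g)..Max ({1..n} - assoc_subset g)}.
            contracts (Suc n) (\<Theta> (Suc n)) (L_ins n i g))"
    unfolding A_def[symmetric] m_def[symmetric] M_def[symmetric]
  proof (intro conjI ballI)
    fix i assume i: "i \<in> {m + 1..M + 1}"
    define Q where "Q = {1..Suc n} - {i}"
    have ir: "i \<in> {1..Suc n}" using i JF(4) by auto
    have Q: "Q \<subseteq> {1..n + 1}" "card Q = n" unfolding Q_def using ir by auto
    have "(phi n 1 Q g [1], phi n 1 Q (swp g (k - 1)) [1]) \<in> \<Theta> (n + 1)"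
      using I Q gg one unfolding insertional_def by blast
    then have e: "(phil n 1 Q g [1], phil n 1 Q (swp g (k - 1)) [1]) \<in> \<Theta> (n + 1)"
      using phi_eq[OF Q gp perms_one] phi_eq[OF Q sgp perms_one] by simp
    define y where "y = phil n 1 Q g [1]"
    have PU: "k - 1 \<in> descents y" "swp y (k - 1) = phil n 1 Q (swp g (k - 1)) [1]"
      "lab (n + 1) y (k - 1) = emb Q ` lab n g (k - 1) \<union> {t \<in> {1..n + 1} - Q. emb Q (g ! Suc (k - 1)) < t}"
      using phiU[OF Q gp perms_one d0] unfolding y_def by auto
    have yp: "y \<in> perms (n + 1)" unfolding y_def using phil_props[OF Q gp perms_one] by auto
    have "(swp y (k - 1), y) \<in> \<Theta> (n + 1)" using e PU(2) cong_sym[OF C[rule_format]] unfolding y_def by simp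
    then have c: "contracts (n + 1) (\<Theta> (n + 1)) (jirr_of (n + 1) (lab (n + 1) y (k - 1)))"
      using edge_to_label[OF C[rule_format] yp PU(1)] by blast
    have "\<And>a. a \<in> A \<Longrightarrow> emb Q a = ins i a" using emb_ins[OF ir] JF(6) unfolding Q_def by blast
    then have eA: "emb Q ` A = ins i ` A" by (rule image_cong[OF refl])
    have em: "emb Q m = m" using emb_ins[OF ir, of m] JF(3,6) i unfolding Q_def ins_def by auto
    have cQ: "{1..n + 1} - Q = {i}" unfolding Q_def using ir by auto
    have "lab (n + 1) y (k - 1) = ins i ` A \<union> {i}"
      unfolding PU(3) labg sk D(3) eA em cQ using i by auto
    also have "\<dots> = Rset n A i" using Rset_ins[OF JF(6)] by simp
    finally show "contracts (Suc n) (\<Theta> (Suc n)) (R_ins n i g)"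
      using c unfolding R_ins_eq A_def[symmetric] by simp
  next
    fix i assume i: "i \<in> {m..M}"
    define Q where "Q = {i}"
    have ir: "i \<in> {1..Suc n}" using i JF(3,6) JF(4) by auto
    have Q: "Q \<subseteq> {1..1 + n}" "card Q = 1" unfolding Q_def using ir by auto
    have "(phi 1 n Q [1] g, phi 1 n Q [1] (swp g (k - 1))) \<in> \<Theta> (1 + n)"
      using I Q gg one unfolding insertional_def by blast
    then have e: "(phil 1 n Q [1] g, phil 1 n Q [1] (swp g (k - 1))) \<in> \<Theta> (1 + n)"
      using phi_eq[OF Q perms_one gp] phi_eq[OF Q perms_one sgp] by simp
    define y where "y = phil 1 n Q [1] g"
    define R where "R = {1..1 + n} - Q"
    have PV: "1 + (k - 1) \<in> descents y" "swp y (1 + (k - 1)) = phil 1 n Q [1] (swp g (k - 1))"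
      "lab (1 + n) y (1 + (k - 1)) = emb R ` lab n g (k - 1) \<union> {t \<in> Q. emb R (g ! (k - 1)) < t}"
      using phiV[OF Q perms_one gp d0] unfolding y_def R_def by auto
    have yp: "y \<in> perms (1 + n)" unfolding y_def using phil_props[OF Q perms_one gp] by auto
    have "(swp y (1 + (k - 1)), y) \<in> \<Theta> (1 + n)" using e PV(2) cong_sym[OF C[rule_format]] unfolding y_def by simp
    then have c: "contracts (1 + n) (\<Theta> (1 + n)) (jirr_of (1 + n) (lab (1 + n) y (1 + (k - 1))))"
      using edge_to_label[OF C[rule_format] yp PV(1)] by blast
    have R': "R = {1..Suc n} - {i}" unfolding R_def Q_def by simp
    have "\<And>a. a \<in> A \<Longrightarrow> emb R a = ins i a" using emb_ins[OF ir] JF(6) unfolding R' by blast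
    then have eA: "emb R ` A = ins i ` A" by (rule image_cong[OF refl])
    have eM: "emb R M = Suc M" using emb_ins[OF ir, of M] JF(4) i unfolding R' ins_def by auto
    have "lab (1 + n) y (1 + (k - 1)) = ins i ` A"
      unfolding PV(3) labg D(2) eA eM Q_def using i by auto
    also have "\<dots> = Lset n A i" using Lset_ins[OF JF(6)] by simp
    finally show "contracts (Suc n) (\<Theta> (Suc n)) (L_ins n i g)"
      using c unfolding L_ins_eq A_def[symmetric] by simp
  qed
qed


theorem proposition8p1:
  fixes \<Theta> :: "nat \<Rightarrow> (nat list \<times> nat list) set"
  assumes "\<forall>n. lattice_congruence n (\<Theta> n)"
  shows "insertional \<Theta> \<longleftrightarrow>
    (\<forall>n g. join_irreducible n g \<and> contracts n (\<Theta> n) g \<longrightarrow>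
       (let A = assoc_subset g; m = Min A; M = Max ({1..n} - A) in
         (\<forall>i\<in>{m+1..M+1}. contracts (Suc n) (\<Theta> (Suc n)) (R_ins n i g)) \<and>
         (\<forall>i\<in>{m..M}. contracts (Suc n) (\<Theta> (Suc n)) (L_ins n i g))))"
proof -
  have "insertional \<Theta> \<longleftrightarrow> Hyp \<Theta>"
    using hyp_imp_insertional[OF assms] insertional_imp_hyp[OF assms] by blast
  then show ?thesis unfolding Hyp_def .
qed

end
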